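(* Let $K>0$ and let $J:V\to V\otimes V$ be any isometric linear isomorphism with $Je_0=e_0\otimes e_0$. There exist $K'>0$ and $\epsilon_0>0$ (independent of $J$) such that for every $0<\epsilon\leq\epsilon_0$ and every 4-tensor $A$ satisfying condition A2 with parameter $\epsilon$ and constant $K$, the tensor $A'$ obtained from $A$ by the type I step satisfies $|A'_{0000}-1|\leq K'\epsilon^4$, and $A'/A'_{0000}$ satisfies condition A3 with parameter $\epsilon$ and constant $K'$.
   Context: $V$ is a real separable infinite-dimensional Hilbert space with orthonormal basis $(e_i)_{i\geq0}$; $V\otimes V$ has orthonormal basis $e_a\otimes e_b$, indexed by pairs $(a,b)$. A 4-tensor is an array $A=(A_{ijkl})_{i,j,k,l\geq0}$ of reals with finite Hilbert–Schmidt norm $\|A\|=(\sum A_{ijkl}^2)^{1/2}$; indices belong to the right, top, left, bottom legs. $A_*$ has $(A_* )_{0000}=1$, all other components $0$. An index is nonzero if it is $\geq1$. Condition A1 (parameter $\epsilon$, constant $K$): $A_{0000}=1$ and $\|A-A_*\|\leq K\epsilon$. Condition A2: A1 holds and the tensor formed by components of $A$ with exactly one nonzero index has norm $\leq K\epsilon^2$. Condition A3: $A_{0000}=1$ and $A=A_*+P+Q$ where $\|P\|\leq K\epsilon$, $\|Q\|\leq K\epsilon^2$, and the only possibly nonzero components of $P$ are "corner" components: $P_{ij00}$, $P_{0jk0}$, $P_{00kl}$, $P_{i00l}$ with both displayed indices nonzero (in particular, components of $P$ with exactly one nonzero index vanish). Type I step: with $T_{(i_1i_2),(j_1j_2),(k_1k_2),(l_1l_2)}=\sum_{a,b,c,d\geq0}A_{aj_1k_1c}A_{i_1j_2ad}A_{bck_2l_1}A_{i_2dbl_2}$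 (contraction of four copies of $A$ in a $2\times2$ block), define $A'_{pqrs}=\sum J_{(i_1i_2),p}J_{(j_1j_2),q}J_{(k_1k_2),r}J_{(l_1l_2),s}T_{(i_1i_2),(j_1j_2),(k_1k_2),(l_1l_2)}$, where $J_{(ab),p}=\langle e_a\otimes e_b,Je_p\rangle$. *)

theory Defs
  imports "HOL-Analysis.Analysis"
begin

text \<open>The Hilbert space V is realised as l2(nat) (coordinates w.r.t. the basis e_i);
  V \<otimes> V is realised as l2(nat \<times> nat) with basis e_a \<otimes> e_b = delta at (a,b).\<close>

definition l2 :: "('a \<Rightarrow> real) set" where
  "l2 = {x. (\<lambda>i. (x i)^2) summable_on UNIV}"

definition l2norm :: "('a \<Rightarrow> real) \<Rightarrow> real" where
  "l2norm x = sqrt (\<Sum>\<^sub>\<infinity>i. (x i)^2)"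

definition basisvec :: "'a \<Rightarrow> 'a \<Rightarrow> real" where
  "basisvec i = (\<lambda>j. if j = i then 1 else 0)"

definition iso_J :: "((nat \<Rightarrow> real) \<Rightarrow> (nat \<times> nat \<Rightarrow> real)) \<Rightarrow> bool" where
  "iso_J J \<longleftrightarrow>
     bij_betw J l2 l2 \<and>
     (\<forall>x\<in>l2. \<forall>y\<in>l2. J (\<lambda>i. x i + y i) = (\<lambda>ab. J x ab + J y ab)) \<and>
     (\<forall>x\<in>l2. \<forall>c. J (\<lambda>i. c * x i) = (\<lambda>ab. c * J x ab)) \<and>
     (\<forall>x\<in>l2. l2norm (J x) = l2norm x) \<and>
     J (basisvec 0) = basisvec (0, 0)"

definition Jcoef :: "((nat \<Rightarrow> real) \<Rightarrow> (nat \<times> nat \<Rightarrow> real)) \<Rightarrow> nat \<times> nat \<Rightarrow> nat \<Rightarrow> real" where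
  "Jcoef J ab p = J (basisvec p) ab"

type_synonym tensor4 = "nat \<Rightarrow> nat \<Rightarrow> nat \<Rightarrow> nat \<Rightarrow> real"

definition hs_fin :: "tensor4 \<Rightarrow> bool" where
  "hs_fin A \<longleftrightarrow> (\<lambda>(i, j, k, l). (A i j k l)^2) summable_on UNIV"

definition hs_norm :: "tensor4 \<Rightarrow> real" where
  "hs_norm A = sqrt (\<Sum>\<^sub>\<infinity>(i, j, k, l). (A i j k l)^2)"

definition Astar :: tensor4 where
  "Astar i j k l = (if i = 0 \<and> j = 0 \<and> k = 0 \<and> l = 0 then 1 else 0)"

definition nnz :: "nat \<Rightarrow> nat" where
  "nnz i = (if i \<ge> 1 then 1 else 0)"

definition one_nz_part :: "tensor4 \<Rightarrow> tensor4" where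
  "one_nz_part A i j k l = (if nnz i + nnz j + nnz k + nnz l = 1 then A i j k l else 0)"

definition condA1 :: "real \<Rightarrow> real \<Rightarrow> tensor4 \<Rightarrow> bool" where
  "condA1 K \<epsilon> A \<longleftrightarrow> hs_fin A \<and> A 0 0 0 0 = 1 \<and>
     hs_norm (\<lambda>i j k l. A i j k l - Astar i j k l) \<le> K * \<epsilon>"

definition condA2 :: "real \<Rightarrow> real \<Rightarrow> tensor4 \<Rightarrow> bool" where
  "condA2 K \<epsilon> A \<longleftrightarrow> condA1 K \<epsilon> A \<and> hs_norm (one_nz_part A) \<le> K * \<epsilon>^2"

definition corner :: "nat \<Rightarrow> nat \<Rightarrow> nat \<Rightarrow> nat \<Rightarrow> bool" where
  "corner i j k l \<longleftrightarrow>
     (i \<ge> 1 \<and> j \<ge> 1 \<and> k = 0 \<and> l = 0) \<or>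
     (i = 0 \<and> j \<ge> 1 \<and> k \<ge> 1 \<and> l = 0) \<or>
     (i = 0 \<and> j = 0 \<and> k \<ge> 1 \<and> l \<ge> 1) \<or>
     (i \<ge> 1 \<and> j = 0 \<and> k = 0 \<and> l \<ge> 1)"

definition condA3 :: "real \<Rightarrow> real \<Rightarrow> tensor4 \<Rightarrow> bool" where
  "condA3 K \<epsilon> A \<longleftrightarrow> A 0 0 0 0 = 1 \<and>
     (\<exists>P Q. hs_fin P \<and> hs_fin Q \<and>
        (\<forall>i j k l. A i j k l = Astar i j k l + P i j k l + Q i j k l) \<and>
        hs_norm P \<le> K * \<epsilon> \<and> hs_norm Q \<le> K * \<epsilon>^2 \<and>
        (\<forall>i j k l. \<not> corner i j k l \<longrightarrow> P i j k l = 0))"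

definition blockT :: "tensor4 \<Rightarrow> nat \<times> nat \<Rightarrow> nat \<times> nat \<Rightarrow> nat \<times> nat \<Rightarrow> nat \<times> nat \<Rightarrow> real" where
  "blockT A = (\<lambda>(i1, i2) (j1, j2) (k1, k2) (l1, l2).
     \<Sum>\<^sub>\<infinity>(a, b, c, d). A a j1 k1 c * A i1 j2 a d * A b c k2 l1 * A i2 d b l2)"

definition typeI :: "((nat \<Rightarrow> real) \<Rightarrow> (nat \<times> nat \<Rightarrow> real)) \<Rightarrow> tensor4 \<Rightarrow> tensor4" where
  "typeI J A p q r s =
     (\<Sum>\<^sub>\<infinity>(x, y, z, w). Jcoef J x p * Jcoef J y q * Jcoef J z r * Jcoef J w s * blockT A x y z w)"

end

theory Submission
  imports Defs
begin

definition sqs :: "('a \<Rightarrow> real) \<Rightarrow> bool" where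
  "sqs f \<longleftrightarrow> (\<lambda>x. (f x)^2) summable_on UNIV"

definition nrm :: "('a \<Rightarrow> real) \<Rightarrow> real" where
  "nrm f = sqrt (\<Sum>\<^sub>\<infinity>x. (f x)^2)"

lemma sq_infsum_nonneg: "0 \<le> (\<Sum>\<^sub>\<infinity>x. (f x)^2 :: real)"
  apply (rule infsum_nonneg)
  apply simp
  done

lemma nrm_nonneg: "0 \<le> nrm f"
  unfolding nrm_def by (simp add: sq_infsum_nonneg)

lemma nrm_sq: "(nrm f)^2 = (\<Sum>\<^sub>\<infinity>x. (f x)^2)"
  unfolding nrm_def using sq_infsum_nonneg by simp

lemma real_summable_abs: "(f::'a\<Rightarrow>real) summable_on A \<Longrightarrow> (\<lambda>x. \<bar>f x\<bar>) summable_on A"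
  using summable_on_iff_abs_summable_on_real by (metis real_norm_def summable_on_cong)

lemma CS_sq:
  assumes "sqs f" "sqs g"
  shows "(\<lambda>x. f x * g x) summable_on UNIV"
    and "(\<Sum>\<^sub>\<infinity>x. f x * g x)^2 \<le> (\<Sum>\<^sub>\<infinity>x. (f x)^2) * (\<Sum>\<^sub>\<infinity>x. (g x)^2)"
proof -
  have f2: "(\<lambda>x. norm (f x * f x)) summable_on UNIV"
    using assms(1) unfolding sqs_def by (simp add: power2_eq_square)
  have g2: "(\<lambda>x. norm (g x * g x)) summable_on UNIV"
    using assms(2) unfolding sqs_def by (simp add: power2_eq_square)
  have ab: "(\<lambda>x. norm (f x * g x)) summable_on UNIV"
    by (rule abs_summable_product[OF f2 g2])
  then show "(\<lambda>x. f x * g x) summable_on UNIV"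
    using summable_on_iff_abs_summable_on_real by blast
  define a where "a = (\<Sum>\<^sub>\<infinity>x. (f x)^2)"
  define b where "b = (\<Sum>\<^sub>\<infinity>x. (g x)^2)"
  have a0: "a \<ge> 0" "b \<ge> 0" unfolding a_def b_def by (auto intro: sq_infsum_nonneg)
  have "(\<Sum>\<^sub>\<infinity>x. norm (f x * g x)) \<le> sqrt (a * b)"
  proof (rule infsum_le_finite_sums)
    show "(\<lambda>x. norm (f x * g x)) summable_on UNIV" using ab by simp
    fix F :: "'a set" assume F: "finite F" "F \<subseteq> UNIV"
    have "(\<Sum>x\<in>F. \<bar>f x\<bar> * \<bar>g x\<bar>)^2 \<le> (\<Sum>x\<in>F. \<bar>f x\<bar>^2) * (\<Sum>x\<in>F. \<bar>g x\<bar>^2)"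
      by (rule Cauchy_Schwarz_ineq_sum)
    also have "\<dots> \<le> a * b"
    proof (rule mult_mono)
      show "(\<Sum>x\<in>F. \<bar>f x\<bar>^2) \<le> a" unfolding a_def
        using finite_sum_le_infsum[of "\<lambda>x. (f x)^2" UNIV F] assms(1) F unfolding sqs_def by simp
      show "(\<Sum>x\<in>F. \<bar>g x\<bar>^2) \<le> b" unfolding b_def
        using finite_sum_le_infsum[of "\<lambda>x. (g x)^2" UNIV F] assms(2) F unfolding sqs_def by simp
    qed (use a0 in \<open>auto intro: sum_nonneg\<close>)
    finally have "(\<Sum>x\<in>F. \<bar>f x\<bar> * \<bar>g x\<bar>) \<le> sqrt (a*b)"
      by (meson real_le_rsqrt)
    then show "(\<Sum>x\<in>F. norm (f x * g x)) \<le> sqrt (a * b)" by (simp add: abs_mult)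
  qed
  moreover have "\<bar>\<Sum>\<^sub>\<infinity>x. f x * g x\<bar> \<le> (\<Sum>\<^sub>\<infinity>x. norm (f x * g x))"
    using norm_infsum_bound[OF ab] by simp
  ultimately have "\<bar>\<Sum>\<^sub>\<infinity>x. f x * g x\<bar> \<le> sqrt (a*b)" by linarith
  then have "\<bar>\<Sum>\<^sub>\<infinity>x. f x * g x\<bar>^2 \<le> (sqrt (a*b))^2"
    by (intro power_mono) auto
  then show "(\<Sum>\<^sub>\<infinity>x. f x * g x)^2 \<le> a * b" using a0 by simp
qed

lemma CS_nrm:
  assumes "sqs f" "sqs g"
  shows "\<bar>\<Sum>\<^sub>\<infinity>x. f x * g x\<bar> \<le> nrm f * nrm g"
proof -
  have "\<bar>\<Sum>\<^sub>\<infinity>x. f x * g x\<bar>^2 \<le> (nrm f * nrm g)^2"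
    using CS_sq(2)[OF assms] by (simp add: power_mult_distrib nrm_sq)
  then show ?thesis using nrm_nonneg
    by (meson abs_ge_zero mult_nonneg_nonneg power2_le_imp_le)
qed

lemma sqs_add:
  assumes "sqs f" "sqs g"
  shows "sqs (\<lambda>x. f x + g x)" and "nrm (\<lambda>x. f x + g x) \<le> nrm f + nrm g"
proof -
  have fg: "(\<lambda>x. f x * g x) summable_on UNIV" by (rule CS_sq(1)[OF assms])
  have f: "(\<lambda>x. (f x)^2) summable_on UNIV" and g: "(\<lambda>x. (g x)^2) summable_on UNIV"
    using assms unfolding sqs_def by auto
  have eq: "(\<lambda>x. (f x + g x)^2) = (\<lambda>x. ((f x)^2 + 2 * (f x * g x)) + (g x)^2)"
    by (simp add: power2_sum algebra_simps)
  have s1: "(\<lambda>x. (f x)^2 + 2 * (f x * g x)) summable_on UNIV"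
    by (intro summable_on_add f summable_on_cmult_right fg)
  show "sqs (\<lambda>x. f x + g x)" unfolding sqs_def eq
    by (intro summable_on_add s1 g)
  have "(\<Sum>\<^sub>\<infinity>x. (f x + g x)^2) = (\<Sum>\<^sub>\<infinity>x. (f x)^2) + 2 * (\<Sum>\<^sub>\<infinity>x. f x * g x) + (\<Sum>\<^sub>\<infinity>x. (g x)^2)"
    unfolding eq
    by (simp add: infsum_add[OF s1 g] infsum_add[OF f summable_on_cmult_right[OF fg]] infsum_cmult_right[OF fg])
  also have "\<dots> \<le> (nrm f)^2 + 2 * (nrm f * nrm g) + (nrm g)^2"
    using CS_nrm[OF assms] by (simp add: nrm_sq)
  also have "\<dots> = (nrm f + nrm g)^2" by (simp add: power2_sum)
  finally have "(nrm (\<lambda>x. f x + g x))^2 \<le> (nrm f + nrm g)^2" by (simp add: nrm_sq)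
  then show "nrm (\<lambda>x. f x + g x) \<le> nrm f + nrm g"
    using nrm_nonneg by (meson add_nonneg_nonneg power2_le_imp_le)
qed

lemma sqs_scale:
  assumes "sqs f"
  shows "sqs (\<lambda>x. c * f x)" and "nrm (\<lambda>x. c * f x) = \<bar>c\<bar> * nrm f"
proof -
  have f: "(\<lambda>x. (f x)^2) summable_on UNIV" using assms unfolding sqs_def by auto
  show "sqs (\<lambda>x. c * f x)" unfolding sqs_def power_mult_distrib
    by (intro summable_on_cmult_right f)
  show "nrm (\<lambda>x. c * f x) = \<bar>c\<bar> * nrm f"
    unfolding nrm_def power_mult_distrib infsum_cmult_right[OF f]
    by (simp add: real_sqrt_mult)
qed

lemma sqs_mono:
  assumes "sqs f" "\<And>x. \<bar>g x\<bar> \<le> \<bar>f x\<bar>"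
  shows "sqs g" and "nrm g \<le> nrm f"
proof -
  have f: "(\<lambda>x. (f x)^2) summable_on UNIV" using assms unfolding sqs_def by auto
  have le: "(g x)^2 \<le> (f x)^2" for x using assms(2)[of x]
    by (metis abs_ge_zero power2_abs power_mono)
  have g: "(\<lambda>x. (g x)^2) summable_on UNIV"
  proof -
    have "(\<lambda>x. norm ((g x)^2)) summable_on UNIV"
      by (rule Infinite_Sum.abs_summable_on_comparison_test[of "\<lambda>x. (f x)^2"])
        (use f le in auto)
    then show ?thesis using summable_on_iff_abs_summable_on_real by blast
  qed
  then show "sqs g" unfolding sqs_def .
  have "(\<Sum>\<^sub>\<infinity>x. (g x)^2) \<le> (\<Sum>\<^sub>\<infinity>x. (f x)^2)"
    by (rule infsum_mono[OF g f le])
  then show "nrm g \<le> nrm f" unfolding nrm_def by simp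
qed

lemma sqs_zero[simp]: "sqs (\<lambda>x. 0)" and nrm_zero[simp]: "nrm (\<lambda>x. 0) = 0"
  unfolding sqs_def nrm_def by auto

lemma sqs_sum:
  assumes "finite S" "\<And>t. t \<in> S \<Longrightarrow> sqs (G t)"
  shows "sqs (\<lambda>x. \<Sum>t\<in>S. G t x) \<and> nrm (\<lambda>x. \<Sum>t\<in>S. G t x) \<le> (\<Sum>t\<in>S. nrm (G t))"
  using assms
proof (induction S rule: finite_induct)
  case empty
  then show ?case by simp
next
  case (insert t S)
  then have IH: "sqs (\<lambda>x. \<Sum>t\<in>S. G t x)" "nrm (\<lambda>x. \<Sum>t\<in>S. G t x) \<le> (\<Sum>t\<in>S. nrm (G t))"
    by auto
  have Gt: "sqs (G t)" using insert by auto
  have "nrm (\<lambda>x. G t x + (\<Sum>t\<in>S. G t x)) \<le> nrm (G t) + nrm (\<lambda>x. \<Sum>t\<in>S. G t x)"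
    by (rule sqs_add(2)[OF Gt IH(1)])
  moreover have "sqs (\<lambda>x. G t x + (\<Sum>t\<in>S. G t x))" by (rule sqs_add(1)[OF Gt IH(1)])
  moreover have "(\<lambda>x. \<Sum>t\<in>insert t S. G t x) = (\<lambda>x. G t x + (\<Sum>t\<in>S. G t x))"
    using insert.hyps by simp
  moreover have "(\<Sum>t\<in>insert t S. nrm (G t)) = nrm (G t) + (\<Sum>t\<in>S. nrm (G t))"
    using insert.hyps by simp
  ultimately show ?case using IH(2) by auto
qed

lemma abs_le_nrm:
  assumes "sqs f"
  shows "\<bar>f x\<bar> \<le> nrm f"
proof -
  have "(f x)^2 \<le> (\<Sum>\<^sub>\<infinity>x. (f x)^2)"
    using finite_sum_le_infsum[of "\<lambda>x. (f x)^2" UNIV "{x}"] assms unfolding sqs_def by simp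
  then show ?thesis unfolding nrm_def by (simp add: real_le_rsqrt)
qed

lemma nrm_le_bound:
  assumes "(\<Sum>\<^sub>\<infinity>x. (f x)^2) \<le> c^2" "c \<ge> 0"
  shows "nrm f \<le> c"
proof -
  have "nrm f \<le> sqrt (c^2)" unfolding nrm_def using assms(1) by (rule real_sqrt_le_mono)
  then show ?thesis using assms(2) by simp
qed

lemma prod_summable:
  fixes f :: "'a \<Rightarrow> real" and g :: "'b \<Rightarrow> real"
  assumes f: "f summable_on UNIV" and g: "g summable_on UNIV"
  shows "(\<lambda>(x,y). f x * g y) summable_on UNIV"
    and "(\<Sum>\<^sub>\<infinity>(x,y). f x * g y) = (\<Sum>\<^sub>\<infinity>x. f x) * (\<Sum>\<^sub>\<infinity>y. g y)"
proof -
  have fa: "(\<lambda>x. \<bar>f x\<bar>) summable_on UNIV" using f by (rule real_summable_abs)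
  have ga: "(\<lambda>x. \<bar>g x\<bar>) summable_on UNIV" using g by (rule real_summable_abs)
  have "(\<lambda>z. norm ((\<lambda>(x,y). f x * g y) z)) summable_on Sigma UNIV (\<lambda>_. UNIV)"
  proof (rule iffD2[OF Infinite_Sum.abs_summable_on_Sigma_iff[of "\<lambda>(x,y). f x * g y" UNIV "\<lambda>_. UNIV"]], intro conjI ballI)
    fix x :: 'a
    show "(\<lambda>y. norm ((\<lambda>(x,y). f x * g y) (x, y))) summable_on UNIV"
      using summable_on_cmult_right[OF ga, of "\<bar>f x\<bar>"] by (simp add: abs_mult)
  next
    have e1: "(\<Sum>\<^sub>\<infinity>y. \<bar>f x * g y\<bar>) = \<bar>f x\<bar> * infsum (\<lambda>y. \<bar>g y\<bar>) UNIV" for x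
      by (simp add: abs_mult infsum_cmult_right[OF ga])
    have "0 \<le> infsum (\<lambda>y. \<bar>g y\<bar>) UNIV" by (rule infsum_nonneg) simp
    moreover have "(\<lambda>x. \<bar>f x\<bar> * infsum (\<lambda>y. \<bar>g y\<bar>) UNIV) summable_on UNIV"
      using summable_on_cmult_left[OF fa, of "infsum (\<lambda>y. \<bar>g y\<bar>) UNIV"] .
    ultimately have "(\<lambda>x. norm (\<bar>f x\<bar> * infsum (\<lambda>y. \<bar>g y\<bar>) UNIV)) summable_on UNIV"
      by (simp add: abs_mult)
    then show "(\<lambda>x. norm (infsum (\<lambda>y. norm ((\<lambda>(x,y). f x * g y) (x, y))) UNIV)) summable_on UNIV"
      by (simp add: e1)
  qed
  then have "(\<lambda>z. norm ((\<lambda>(x,y). f x * g y) z)) summable_on UNIV" by simp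
  then show S: "(\<lambda>(x,y). f x * g y) summable_on UNIV"
    using summable_on_iff_abs_summable_on_real by blast
  have "(\<Sum>\<^sub>\<infinity>(x,y). f x * g y) = (\<Sum>\<^sub>\<infinity>x. \<Sum>\<^sub>\<infinity>y. f x * g y)"
    using infsum_Sigma_banach[of "\<lambda>(x,y). f x * g y" UNIV "\<lambda>_. UNIV"] S by simp
  also have "\<dots> = (\<Sum>\<^sub>\<infinity>x. f x * (\<Sum>\<^sub>\<infinity>y. g y))"
    by (simp add: infsum_cmult_right[OF g])
  also have "\<dots> = (\<Sum>\<^sub>\<infinity>x. f x) * (\<Sum>\<^sub>\<infinity>y. g y)"
    by (simp add: infsum_cmult_left[OF f])
  finally show "(\<Sum>\<^sub>\<infinity>(x,y). f x * g y) = (\<Sum>\<^sub>\<infinity>x. f x) * (\<Sum>\<^sub>\<infinity>y. g y)" .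
qed

lemma infsum_fsum:
  fixes f :: "'i \<Rightarrow> 'a \<Rightarrow> real"
  assumes "finite F" "\<And>i. i \<in> F \<Longrightarrow> f i summable_on UNIV"
  shows "(\<lambda>x. \<Sum>i\<in>F. f i x) summable_on UNIV \<and> (\<Sum>\<^sub>\<infinity>x. \<Sum>i\<in>F. f i x) = (\<Sum>i\<in>F. \<Sum>\<^sub>\<infinity>x. f i x)"
  using assms
proof (induction F rule: finite_induct)
  case empty
  then show ?case by simp
next
  case (insert j F)
  then have IH: "(\<lambda>x. \<Sum>i\<in>F. f i x) summable_on UNIV" "(\<Sum>\<^sub>\<infinity>x. \<Sum>i\<in>F. f i x) = (\<Sum>i\<in>F. \<Sum>\<^sub>\<infinity>x. f i x)"
    by auto
  have fj: "f j summable_on UNIV" using insert by auto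
  have e: "(\<lambda>x. \<Sum>i\<in>insert j F. f i x) = (\<lambda>x. f j x + (\<Sum>i\<in>F. f i x))"
    using insert.hyps by simp
  show ?case unfolding e
    using summable_on_add[OF fj IH(1)] infsum_add[OF fj IH(1)] IH(2) insert.hyps by simp
qed

lemma infsum_single:
  fixes c :: real
  shows "(\<Sum>\<^sub>\<infinity>x. if x = a then c else 0) = c"
proof -
  have "(\<Sum>\<^sub>\<infinity>x. if x = a then c else 0) = (\<Sum>\<^sub>\<infinity>x\<in>{a}. c)"
    by (rule infsum_cong_neutral) auto
  then show ?thesis by simp
qed

definition ip :: "('a \<Rightarrow> real) \<Rightarrow> ('a \<Rightarrow> real) \<Rightarrow> real" where
  "ip f g = (\<Sum>\<^sub>\<infinity>x. f x * g x)"

lemma ip_fsum_left: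
  assumes "finite F" "\<And>i. i \<in> F \<Longrightarrow> sqs (\<phi> i)" "sqs g"
  shows "ip (\<lambda>x. \<Sum>i\<in>F. c i * \<phi> i x) g = (\<Sum>i\<in>F. c i * ip (\<phi> i) g)"
proof -
  have s: "(\<lambda>x. c i * (\<phi> i x * g x)) summable_on UNIV" if "i \<in> F" for i
    using CS_sq(1)[OF assms(2)[OF that] assms(3)] by (rule summable_on_cmult_right)
  have "ip (\<lambda>x. \<Sum>i\<in>F. c i * \<phi> i x) g = (\<Sum>\<^sub>\<infinity>x. \<Sum>i\<in>F. c i * (\<phi> i x * g x))"
    unfolding ip_def by (simp add: sum_distrib_right mult.assoc)
  also have "\<dots> = (\<Sum>i\<in>F. \<Sum>\<^sub>\<infinity>x. c i * (\<phi> i x * g x))"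
    using infsum_fsum[OF assms(1), of "\<lambda>i x. c i * (\<phi> i x * g x)"] s by blast
  also have "\<dots> = (\<Sum>i\<in>F. c i * ip (\<phi> i) g)"
    unfolding ip_def by (intro sum.cong refl infsum_cmult_right) (use CS_sq(1) assms in auto)
  finally show ?thesis .
qed

lemma sqs_fsum:
  assumes "finite F" "\<And>i. i \<in> F \<Longrightarrow> sqs (\<phi> i)"
  shows "sqs (\<lambda>x. \<Sum>i\<in>F. c i * \<phi> i x)"
  using sqs_sum[OF assms(1), of "\<lambda>i x. c i * \<phi> i x"] sqs_scale(1) assms(2) by blast

lemma ip_diff_expand:
  assumes "sqs X" "sqs S"
  shows "ip (\<lambda>x. X x - S x) (\<lambda>x. X x - S x) = ip X X - 2 * ip S X + ip S S"
proof -
  have a: "(\<lambda>x. X x * X x) summable_on UNIV" using CS_sq(1)[OF assms(1) assms(1)] .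
  have b: "(\<lambda>x. S x * X x) summable_on UNIV" using CS_sq(1)[OF assms(2) assms(1)] .
  have c: "(\<lambda>x. S x * S x) summable_on UNIV" using CS_sq(1)[OF assms(2) assms(2)] .
  have e: "(\<lambda>x. (X x - S x) * (X x - S x)) = (\<lambda>x. (X x * X x + (-2) * (S x * X x)) + S x * S x)"
    by (auto simp: algebra_simps)
  have b2: "(\<lambda>x. (-2) * (S x * X x)) summable_on UNIV" using b by (rule summable_on_cmult_right)
  show ?thesis unfolding ip_def e
    using infsum_add[OF summable_on_add[OF a b2] c] infsum_add[OF a b2] infsum_cmult_right[OF b, of "-2"]
    by simp
qed

lemma bessel:
  fixes \<phi> :: "'i \<Rightarrow> 'a \<Rightarrow> real" and X :: "'a \<Rightarrow> real"
  assumes phis: "\<And>i. sqs (\<phi> i)"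
    and orth: "\<And>i j. (\<Sum>\<^sub>\<infinity>x. \<phi> i x * \<phi> j x) = (if i = j then 1 else 0)"
    and X: "sqs X"
  shows "sqs (\<lambda>i. \<Sum>\<^sub>\<infinity>x. \<phi> i x * X x)" and "nrm (\<lambda>i. \<Sum>\<^sub>\<infinity>x. \<phi> i x * X x) \<le> nrm X"
proof -
  define c where "c i = ip (\<phi> i) X" for i
  have cdef: "(\<Sum>\<^sub>\<infinity>x. \<phi> i x * X x) = c i" for i unfolding c_def ip_def ..
  have fin: "(\<Sum>i\<in>F. (c i)^2) \<le> ip X X" if F: "finite F" for F
  proof -
    define S where "S x = (\<Sum>i\<in>F. c i * \<phi> i x)" for x
    have SS: "sqs S" unfolding S_def by (rule sqs_fsum[OF F]) (use phis in auto)
    have Sfun: "S = (\<lambda>x. \<Sum>i\<in>F. c i * \<phi> i x)" unfolding S_def ..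
    have ipSX: "ip S X = (\<Sum>i\<in>F. (c i)^2)"
      unfolding Sfun by (subst ip_fsum_left[OF F _ X]) (auto simp: phis c_def power2_eq_square)
    have ipphiS: "ip (\<phi> j) S = c j" if "j \<in> F" for j
    proof -
      have "ip (\<phi> j) S = ip S (\<phi> j)" unfolding ip_def by (simp add: mult.commute)
      also have "\<dots> = (\<Sum>i\<in>F. c i * ip (\<phi> i) (\<phi> j))"
        unfolding Sfun by (rule ip_fsum_left[OF F]) (auto simp: phis)
      also have "\<dots> = (\<Sum>i\<in>F. if i = j then c i else 0)"
        by (intro sum.cong refl) (simp add: ip_def orth)
      also have "\<dots> = c j" using that F by simp
      finally show ?thesis .
    qed
    have ipSS: "ip S S = (\<Sum>i\<in>F. (c i)^2)"
    proof -
      have "ip S S = (\<Sum>i\<in>F. c i * ip (\<phi> i) S)"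
        by (subst (1) Sfun, rule ip_fsum_left[OF F _ SS]) (auto simp: phis)
      also have "\<dots> = (\<Sum>i\<in>F. (c i)^2)"
        by (intro sum.cong refl) (simp add: ipphiS power2_eq_square)
      finally show ?thesis .
    qed
    have "0 \<le> ip (\<lambda>x. X x - S x) (\<lambda>x. X x - S x)"
      unfolding ip_def by (rule infsum_nonneg) simp
    also have "\<dots> = ip X X - (\<Sum>i\<in>F. (c i)^2)"
      using ip_diff_expand[OF X SS] ipSX ipSS by simp
    finally show ?thesis by simp
  qed
  have ipXX: "ip X X = (\<Sum>\<^sub>\<infinity>x. (X x)^2)" unfolding ip_def by (simp add: power2_eq_square)
  have summ: "(\<lambda>i. (c i)^2) summable_on UNIV"
  proof (rule nonneg_bdd_above_summable_on)
    show "bdd_above (sum (\<lambda>i. (c i)^2) ` {F. F \<subseteq> UNIV \<and> finite F})"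
      using fin by (auto intro!: bdd_aboveI2[where M="ip X X"])
  qed simp
  then show "sqs (\<lambda>i. \<Sum>\<^sub>\<infinity>x. \<phi> i x * X x)" unfolding sqs_def cdef .
  have "(\<Sum>\<^sub>\<infinity>i. (c i)^2) \<le> ip X X"
    by (rule infsum_le_finite_sums[OF summ]) (use fin in auto)
  then show "nrm (\<lambda>i. \<Sum>\<^sub>\<infinity>x. \<phi> i x * X x) \<le> nrm X"
    unfolding nrm_def cdef ipXX by simp
qed

lemma l2_sqs: "l2 = {x. sqs x}"
  unfolding l2_def sqs_def by simp

lemma l2norm_nrm: "l2norm = nrm"
  unfolding l2norm_def nrm_def by (rule ext) simp

lemma sq_sum_expand:
  assumes "sqs f" "sqs g"
  shows "(\<Sum>\<^sub>\<infinity>x. (f x + g x)^2) = (\<Sum>\<^sub>\<infinity>x. (f x)^2) + 2 * (\<Sum>\<^sub>\<infinity>x. f x * g x) + (\<Sum>\<^sub>\<infinity>x. (g x)^2)"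
proof -
  have fg: "(\<lambda>x. f x * g x) summable_on UNIV" by (rule CS_sq(1)[OF assms])
  have f: "(\<lambda>x. (f x)^2) summable_on UNIV" and g: "(\<lambda>x. (g x)^2) summable_on UNIV"
    using assms unfolding sqs_def by auto
  have eq: "(\<lambda>x. (f x + g x)^2) = (\<lambda>x. ((f x)^2 + 2 * (f x * g x)) + (g x)^2)"
    by (simp add: power2_sum algebra_simps)
  have s1: "(\<lambda>x. (f x)^2 + 2 * (f x * g x)) summable_on UNIV"
    by (intro summable_on_add f summable_on_cmult_right fg)
  show ?thesis unfolding eq
    by (simp add: infsum_add[OF s1 g] infsum_add[OF f summable_on_cmult_right[OF fg]] infsum_cmult_right[OF fg])
qed

lemma basisvec_sqs: "sqs (basisvec p)"
  unfolding sqs_def basisvec_def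
proof -
  have "(\<lambda>x. (if x = p then 1 else 0 :: real)^2) = (\<lambda>x. if x = p then 1 else 0)" by auto
  moreover have "(\<lambda>x. if x = p then 1 else 0 :: real) summable_on UNIV"
    by (rule summable_on_cong_neutral[where T="{p}" and g="\<lambda>_. 1", THEN iffD2]) auto
  ultimately show "(\<lambda>x. (if x = p then 1 else 0 :: real)^2) summable_on UNIV" by simp
qed

lemma basisvec_nrm: "nrm (basisvec p) = 1"
proof -
  have "(\<lambda>x. (basisvec p x)^2) = (\<lambda>x. if x = p then 1 else (0::real))"
    unfolding basisvec_def by auto
  then show ?thesis unfolding nrm_def by (simp add: infsum_single)
qed

lemma basisvec_pair_nrm:
  assumes "p \<noteq> q"
  shows "(\<Sum>\<^sub>\<infinity>x. (basisvec p x + basisvec q x)^2) = 2"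
proof -
  have "(\<Sum>\<^sub>\<infinity>x. (basisvec p x + basisvec q x)^2) = (\<Sum>\<^sub>\<infinity>x\<in>{p,q}. 1::real)"
    by (rule infsum_cong_neutral) (auto simp: basisvec_def assms)
  then show ?thesis using assms by simp
qed

definition Jv :: "((nat \<Rightarrow> real) \<Rightarrow> (nat \<times> nat \<Rightarrow> real)) \<Rightarrow> nat \<Rightarrow> nat \<times> nat \<Rightarrow> real" where
  "Jv J p = J (basisvec p)"

lemma Jcoef_Jv: "Jcoef J x p = Jv J p x"
  unfolding Jcoef_def Jv_def ..

context
  fixes J assumes iso: "iso_J J"
begin

lemma Jv_sqs: "sqs (Jv J p)"
proof -
  have "basisvec p \<in> l2" unfolding l2_sqs using basisvec_sqs by simp
  then have "J (basisvec p) \<in> l2" using iso unfolding iso_J_def bij_betw_def by auto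
  then show ?thesis unfolding Jv_def l2_sqs by simp
qed

lemma Jv_nrm: "nrm (Jv J p) = 1"
proof -
  have "basisvec p \<in> l2" unfolding l2_sqs using basisvec_sqs by simp
  then show ?thesis using iso basisvec_nrm unfolding iso_J_def Jv_def l2norm_nrm by auto
qed

lemma Jv0: "Jv J 0 = basisvec (0,0)"
  using iso unfolding iso_J_def Jv_def by auto

lemma Jv_orth: "(\<Sum>\<^sub>\<infinity>x. Jv J p x * Jv J q x) = (if p = q then 1 else 0)"
proof (cases "p = q")
  case True
  have "(\<Sum>\<^sub>\<infinity>x. Jv J p x * Jv J p x) = (nrm (Jv J p))^2"
    unfolding nrm_sq by (simp add: power2_eq_square)
  then show ?thesis using True Jv_nrm by simp
next
  case False
  have bp: "basisvec p \<in> l2" "basisvec q \<in> l2" unfolding l2_sqs using basisvec_sqs by simp_all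
  have add: "J (\<lambda>i. basisvec p i + basisvec q i) = (\<lambda>ab. Jv J p ab + Jv J q ab)"
    using iso bp unfolding iso_J_def Jv_def by auto
  have s: "(\<lambda>i. basisvec p i + basisvec q i) \<in> l2"
    unfolding l2_sqs using sqs_add(1)[OF basisvec_sqs basisvec_sqs] by simp
  have "nrm (\<lambda>ab. Jv J p ab + Jv J q ab) = nrm (\<lambda>i. basisvec p i + basisvec q i)"
    using iso s add unfolding iso_J_def l2norm_nrm by metis
  then have "(nrm (\<lambda>ab. Jv J p ab + Jv J q ab))^2 = 2"
    by (simp add: nrm_sq basisvec_pair_nrm[OF False])
  then have "(\<Sum>\<^sub>\<infinity>x. (Jv J p x + Jv J q x)^2) = 2" by (simp add: nrm_sq)
  then have "1 + 2 * (\<Sum>\<^sub>\<infinity>x. Jv J p x * Jv J q x) + 1 = (2::real)"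
    using sq_sum_expand[OF Jv_sqs Jv_sqs, of p q] Jv_nrm[of p] Jv_nrm[of q] nrm_sq[of "Jv J p"] nrm_sq[of "Jv J q"] by simp
  then show ?thesis using False by simp
qed

lemma Jv_00: "Jv J p (0,0) = (if p = 0 then 1 else 0)"
proof -
  have "(\<lambda>x. Jv J p x * Jv J 0 x) = (\<lambda>x. if x = (0,0) then Jv J p (0,0) else 0)"
    unfolding Jv0 basisvec_def by auto
  then have "(\<Sum>\<^sub>\<infinity>x. Jv J p x * Jv J 0 x) = (\<Sum>\<^sub>\<infinity>x::nat\<times>nat. if x = (0,0) then Jv J p (0,0) else 0)"
    by simp
  then show ?thesis using Jv_orth[of p 0] by (simp add: infsum_single)
qed

lemma Jv0_apply: "Jv J 0 x = (if x = (0,0) then 1 else 0)"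
  unfolding Jv0 basisvec_def by simp

end

definition uc :: "tensor4 \<Rightarrow> nat \<times> nat \<times> nat \<times> nat \<Rightarrow> real" where
  "uc X = (\<lambda>(i,j,k,l). X i j k l)"

lemma uc_apply[simp]: "uc X (i,j,k,l) = X i j k l" unfolding uc_def by simp

lemma hs_fin_sqs: "hs_fin X \<longleftrightarrow> sqs (uc X)"
proof -
  have "(\<lambda>x. (uc X x)^2) = (\<lambda>(i,j,k,l). (X i j k l)^2)" by (auto simp: uc_def fun_eq_iff)
  then show ?thesis unfolding hs_fin_def sqs_def by simp
qed

lemma hs_norm_nrm: "hs_norm X = nrm (uc X)"
proof -
  have "(\<lambda>x. (uc X x)^2) = (\<lambda>(i,j,k,l). (X i j k l)^2)" by (auto simp: uc_def fun_eq_iff)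
  then show ?thesis unfolding hs_norm_def nrm_def by simp
qed

lemma prod4_summable:
  fixes f1 f2 f3 f4 :: "_ \<Rightarrow> real"
  assumes "f1 summable_on UNIV" "f2 summable_on UNIV" "f3 summable_on UNIV" "f4 summable_on UNIV"
  shows "(\<lambda>(x,y,z,w). f1 x * f2 y * f3 z * f4 w) summable_on UNIV"
    and "(\<Sum>\<^sub>\<infinity>(x,y,z,w). f1 x * f2 y * f3 z * f4 w) = (\<Sum>\<^sub>\<infinity>x. f1 x) * (\<Sum>\<^sub>\<infinity>x. f2 x) * (\<Sum>\<^sub>\<infinity>x. f3 x) * (\<Sum>\<^sub>\<infinity>x. f4 x)"
proof -
  note A = prod_summable[OF assms(3) assms(4)]
  note B = prod_summable[OF assms(2) A(1)]
  note C = prod_summable[OF assms(1) B(1)]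
  have e: "(\<lambda>(x,y,z,w). f1 x * f2 y * f3 z * f4 w) = (\<lambda>(x, y). f1 x * (case y of (x, y) \<Rightarrow> f2 x * (case y of (x, y) \<Rightarrow> f3 x * f4 y)))"
    by (auto simp: fun_eq_iff mult.assoc)
  show "(\<lambda>(x,y,z,w). f1 x * f2 y * f3 z * f4 w) summable_on UNIV" unfolding e by (rule C(1))
  show "(\<Sum>\<^sub>\<infinity>(x,y,z,w). f1 x * f2 y * f3 z * f4 w) = (\<Sum>\<^sub>\<infinity>x. f1 x) * (\<Sum>\<^sub>\<infinity>x. f2 x) * (\<Sum>\<^sub>\<infinity>x. f3 x) * (\<Sum>\<^sub>\<infinity>x. f4 x)"
    unfolding e C(2) B(2) A(2) by (simp add: mult.assoc)
qed

lemma slice: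
  fixes g :: "('u \<times> 'v) \<Rightarrow> nat \<times> nat \<times> nat \<times> nat"
  assumes hs: "hs_fin X" and inv1: "\<And>w. h (g w) = w" and inv2: "\<And>z. g (h z) = z"
  shows "(\<lambda>w. (uc X (g w))^2) summable_on UNIV"
    and "(\<lambda>v. (uc X (g (u,v)))^2) summable_on UNIV"
    and "(\<lambda>u. \<Sum>\<^sub>\<infinity>v. (uc X (g (u,v)))^2) summable_on UNIV"
    and "(\<Sum>\<^sub>\<infinity>u. \<Sum>\<^sub>\<infinity>v. (uc X (g (u,v)))^2) = (hs_norm X)^2"
proof -
  have bij: "bij_betw g UNIV UNIV"
    by (rule bij_betwI[where g=h]) (auto simp: inv1 inv2)
  have ux: "(\<lambda>z. (uc X z)^2) summable_on UNIV" using hs unfolding hs_fin_sqs sqs_def .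
  show H: "(\<lambda>w. (uc X (g w))^2) summable_on UNIV"
    using summable_on_reindex_bij_betw[OF bij, of "\<lambda>z. (uc X z)^2"] ux by simp
  have "(\<lambda>w. (uc X (g w))^2) summable_on (Pair u ` UNIV)"
    by (rule summable_on_subset_banach[OF H]) auto
  then show "(\<lambda>v. (uc X (g (u,v)))^2) summable_on UNIV"
    using summable_on_reindex[of "Pair u" UNIV "\<lambda>w. (uc X (g w))^2"] by (simp add: inj_on_def o_def)
  have H': "(\<lambda>(u,v). (uc X (g (u,v)))^2) summable_on Sigma UNIV (\<lambda>_. UNIV)"
    using H by (simp add: case_prod_beta')
  show "(\<lambda>u. \<Sum>\<^sub>\<infinity>v. (uc X (g (u,v)))^2) summable_on UNIV"
    using summable_on_Sigma_banach[OF H'] .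
  have "(\<Sum>\<^sub>\<infinity>u. \<Sum>\<^sub>\<infinity>v. (uc X (g (u,v)))^2) = (\<Sum>\<^sub>\<infinity>(u,v). (uc X (g (u,v)))^2)"
    using infsum_Sigma'_banach[OF H'] by simp
  also have "\<dots> = (\<Sum>\<^sub>\<infinity>w. (uc X (g w))^2)" by (simp add: case_prod_beta')
  also have "\<dots> = (\<Sum>\<^sub>\<infinity>z. (uc X z)^2)"
    using infsum_reindex_bij_betw[OF bij, of "\<lambda>z. (uc X z)^2"] by simp
  also have "\<dots> = (hs_norm X)^2" unfolding hs_norm_nrm nrm_sq ..
  finally show "(\<Sum>\<^sub>\<infinity>u. \<Sum>\<^sub>\<infinity>v. (uc X (g (u,v)))^2) = (hs_norm X)^2" .
qed

definition R1 :: "tensor4 \<Rightarrow> nat \<times> nat \<Rightarrow> real" where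
  "R1 X = (\<lambda>(j,k). \<Sum>\<^sub>\<infinity>(a,c). (X a j k c)^2)"
definition R2 :: "tensor4 \<Rightarrow> nat \<times> nat \<Rightarrow> real" where
  "R2 X = (\<lambda>(i,j). \<Sum>\<^sub>\<infinity>(a,d). (X i j a d)^2)"
definition R3 :: "tensor4 \<Rightarrow> nat \<times> nat \<Rightarrow> real" where
  "R3 X = (\<lambda>(k,l). \<Sum>\<^sub>\<infinity>(b,c). (X b c k l)^2)"
definition R4 :: "tensor4 \<Rightarrow> nat \<times> nat \<Rightarrow> real" where
  "R4 X = (\<lambda>(i,l). \<Sum>\<^sub>\<infinity>(d,b). (X i d b l)^2)"

lemma R1_facts:
  assumes "hs_fin X"
  shows "(\<lambda>(a,c). (X a j k c)^2) summable_on UNIV" "R1 X summable_on UNIV"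
    "(\<Sum>\<^sub>\<infinity>u. R1 X u) = (hs_norm X)^2"
proof -
  define g where "g = (\<lambda>((j::nat,k::nat),(a::nat,c::nat)). (a,j,k,c))"
  define h where "h = (\<lambda>(a::nat,j::nat,k::nat,c::nat). ((j,k),(a,c)))"
  have i1: "\<And>w. h (g w) = w" and i2: "\<And>z. g (h z) = z" by (auto simp: g_def h_def)
  have e1: "(\<lambda>v. (uc X (g ((j,k),v)))^2) = (\<lambda>(a,c). (X a j k c)^2)" for j k
    by (auto simp: fun_eq_iff g_def)
  have e2: "(\<lambda>u. \<Sum>\<^sub>\<infinity>v. (uc X (g (u,v)))^2) = R1 X"
    by (auto simp: fun_eq_iff R1_def e1)
  show "(\<lambda>(a,c). (X a j k c)^2) summable_on UNIV" using slice(2)[OF assms i1 i2, of "(j,k)"] e1 by simp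
  show "R1 X summable_on UNIV" using slice(3)[OF assms i1 i2] e2 by simp
  show "(\<Sum>\<^sub>\<infinity>u. R1 X u) = (hs_norm X)^2" using slice(4)[OF assms i1 i2] e2 by simp
qed

lemma R2_facts:
  assumes "hs_fin X"
  shows "(\<lambda>(a,d). (X i j a d)^2) summable_on UNIV" "R2 X summable_on UNIV"
    "(\<Sum>\<^sub>\<infinity>u. R2 X u) = (hs_norm X)^2"
proof -
  define g where "g = (\<lambda>((i::nat,j::nat),(a::nat,d::nat)). (i,j,a,d))"
  define h where "h = (\<lambda>(i::nat,j::nat,a::nat,d::nat). ((i,j),(a,d)))"
  have i1: "\<And>w. h (g w) = w" and i2: "\<And>z. g (h z) = z" by (auto simp: g_def h_def)
  have e1: "(\<lambda>v. (uc X (g ((i,j),v)))^2) = (\<lambda>(a,d). (X i j a d)^2)" for i j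
    by (auto simp: fun_eq_iff g_def)
  have e2: "(\<lambda>u. \<Sum>\<^sub>\<infinity>v. (uc X (g (u,v)))^2) = R2 X"
    by (auto simp: fun_eq_iff R2_def e1)
  show "(\<lambda>(a,d). (X i j a d)^2) summable_on UNIV" using slice(2)[OF assms i1 i2, of "(i,j)"] e1 by simp
  show "R2 X summable_on UNIV" using slice(3)[OF assms i1 i2] e2 by simp
  show "(\<Sum>\<^sub>\<infinity>u. R2 X u) = (hs_norm X)^2" using slice(4)[OF assms i1 i2] e2 by simp
qed

lemma R3_facts:
  assumes "hs_fin X"
  shows "(\<lambda>(b,c). (X b c k l)^2) summable_on UNIV" "R3 X summable_on UNIV"
    "(\<Sum>\<^sub>\<infinity>u. R3 X u) = (hs_norm X)^2"
proof -
  define g where "g = (\<lambda>((k::nat,l::nat),(b::nat,c::nat)). (b,c,k,l))"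
  define h where "h = (\<lambda>(b::nat,c::nat,k::nat,l::nat). ((k,l),(b,c)))"
  have i1: "\<And>w. h (g w) = w" and i2: "\<And>z. g (h z) = z" by (auto simp: g_def h_def)
  have e1: "(\<lambda>v. (uc X (g ((k,l),v)))^2) = (\<lambda>(b,c). (X b c k l)^2)" for k l
    by (auto simp: fun_eq_iff g_def)
  have e2: "(\<lambda>u. \<Sum>\<^sub>\<infinity>v. (uc X (g (u,v)))^2) = R3 X"
    by (auto simp: fun_eq_iff R3_def e1)
  show "(\<lambda>(b,c). (X b c k l)^2) summable_on UNIV" using slice(2)[OF assms i1 i2, of "(k,l)"] e1 by simp
  show "R3 X summable_on UNIV" using slice(3)[OF assms i1 i2] e2 by simp
  show "(\<Sum>\<^sub>\<infinity>u. R3 X u) = (hs_norm X)^2" using slice(4)[OF assms i1 i2] e2 by simp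
qed

lemma R4_facts:
  assumes "hs_fin X"
  shows "(\<lambda>(d,b). (X i d b l)^2) summable_on UNIV" "R4 X summable_on UNIV"
    "(\<Sum>\<^sub>\<infinity>u. R4 X u) = (hs_norm X)^2"
proof -
  define g where "g = (\<lambda>((i::nat,l::nat),(d::nat,b::nat)). (i,d,b,l))"
  define h where "h = (\<lambda>(i::nat,d::nat,b::nat,l::nat). ((i,l),(d,b)))"
  have i1: "\<And>w. h (g w) = w" and i2: "\<And>z. g (h z) = z" by (auto simp: g_def h_def)
  have e1: "(\<lambda>v. (uc X (g ((i,l),v)))^2) = (\<lambda>(d,b). (X i d b l)^2)" for i l
    by (auto simp: fun_eq_iff g_def)
  have e2: "(\<lambda>u. \<Sum>\<^sub>\<infinity>v. (uc X (g (u,v)))^2) = R4 X"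
    by (auto simp: fun_eq_iff R4_def e1)
  show "(\<lambda>(d,b). (X i d b l)^2) summable_on UNIV" using slice(2)[OF assms i1 i2, of "(i,l)"] e1 by simp
  show "R4 X summable_on UNIV" using slice(3)[OF assms i1 i2] e2 by simp
  show "(\<Sum>\<^sub>\<infinity>u. R4 X u) = (hs_norm X)^2" using slice(4)[OF assms i1 i2] e2 by simp
qed

lemma R_nonneg: "0 \<le> R1 X u" "0 \<le> R2 X u" "0 \<le> R3 X u" "0 \<le> R4 X u"
  unfolding R1_def R2_def R3_def R4_def
  by (auto simp: case_prod_beta intro!: infsum_nonneg)

definition T4 :: "tensor4 \<Rightarrow> tensor4 \<Rightarrow> tensor4 \<Rightarrow> tensor4 \<Rightarrow> nat \<times> nat \<Rightarrow> nat \<times> nat \<Rightarrow> nat \<times> nat \<Rightarrow> nat \<times> nat \<Rightarrow> real" where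
  "T4 X1 X2 X3 X4 = (\<lambda>(i1, i2) (j1, j2) (k1, k2) (m1, m2).
     \<Sum>\<^sub>\<infinity>(a, b, c, d). X1 a j1 k1 c * X2 i1 j2 a d * X3 b c k2 m1 * X4 i2 d b m2)"

lemma blockT_T4: "blockT A = T4 A A A A"
  unfolding blockT_def T4_def ..

lemma T4_apply: "T4 X1 X2 X3 X4 (i1,i2) (j1,j2) (k1,k2) (m1,m2) =
     (\<Sum>\<^sub>\<infinity>(a, b, c, d). X1 a j1 k1 c * X2 i1 j2 a d * X3 b c k2 m1 * X4 i2 d b m2)"
  unfolding T4_def by simp

lemma T4_pt:
  assumes h1: "hs_fin X1" and h2: "hs_fin X2" and h3: "hs_fin X3" and h4: "hs_fin X4"
  shows "(\<lambda>(a, b, c, d). X1 a j1 k1 c * X2 i1 j2 a d * X3 b c k2 m1 * X4 i2 d b m2) summable_on UNIV"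
    and "(T4 X1 X2 X3 X4 (i1,i2) (j1,j2) (k1,k2) (m1,m2))^2 \<le>
          R1 X1 (j1,k1) * R2 X2 (i1,j2) * R3 X3 (k2,m1) * R4 X4 (i2,m2)"
proof -
  define F where "F = (\<lambda>(a::nat, b::nat, c::nat, d::nat). X1 a j1 k1 c * X4 i2 d b m2)"
  define G where "G = (\<lambda>(a::nat, b::nat, c::nat, d::nat). X2 i1 j2 a d * X3 b c k2 m1)"
  note s1 = R1_facts(1)[OF h1, of j1 k1]
  note s2 = R2_facts(1)[OF h2, of i1 j2]
  note s3 = R3_facts(1)[OF h3, of k2 m1]
  note s4 = R4_facts(1)[OF h4, of i2 m2]
  note P14 = prod_summable[OF s1 s4]
  note P23 = prod_summable[OF s2 s3]
  have F2: "(\<lambda>z. (F z)^2) summable_on UNIV \<longleftrightarrow>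
     (\<lambda>(v, w). (case v of (a, c) \<Rightarrow> (X1 a j1 k1 c)^2) * (case w of (d, b) \<Rightarrow> (X4 i2 d b m2)^2)) summable_on UNIV"
    by (rule summable_on_reindex_bij_witness[where j="\<lambda>(a,b,c,d). ((a,c),(d,b))" and i="\<lambda>((a,c),(d,b)). (a,b,c,d)"])
      (auto simp: F_def power_mult_distrib)
  have F2s: "(\<Sum>\<^sub>\<infinity>z. (F z)^2) =
     (\<Sum>\<^sub>\<infinity>(v, w). (case v of (a, c) \<Rightarrow> (X1 a j1 k1 c)^2) * (case w of (d, b) \<Rightarrow> (X4 i2 d b m2)^2))"
    by (rule infsum_reindex_bij_witness[where j="\<lambda>(a,b,c,d). ((a,c),(d,b))" and i="\<lambda>((a,c),(d,b)). (a,b,c,d)"])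
      (auto simp: F_def power_mult_distrib)
  have G2: "(\<lambda>z. (G z)^2) summable_on UNIV \<longleftrightarrow>
     (\<lambda>(v, w). (case v of (a, d) \<Rightarrow> (X2 i1 j2 a d)^2) * (case w of (b, c) \<Rightarrow> (X3 b c k2 m1)^2)) summable_on UNIV"
    by (rule summable_on_reindex_bij_witness[where j="\<lambda>(a,b,c,d). ((a,d),(b,c))" and i="\<lambda>((a,d),(b,c)). (a,b,c,d)"])
      (auto simp: G_def power_mult_distrib)
  have G2s: "(\<Sum>\<^sub>\<infinity>z. (G z)^2) =
     (\<Sum>\<^sub>\<infinity>(v, w). (case v of (a, d) \<Rightarrow> (X2 i1 j2 a d)^2) * (case w of (b, c) \<Rightarrow> (X3 b c k2 m1)^2))"
    by (rule infsum_reindex_bij_witness[where j="\<lambda>(a,b,c,d). ((a,d),(b,c))" and i="\<lambda>((a,d),(b,c)). (a,b,c,d)"])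
      (auto simp: G_def power_mult_distrib)
  have sF: "sqs F" unfolding sqs_def using F2 P14(1) by simp
  have sG: "sqs G" unfolding sqs_def using G2 P23(1) by simp
  have FGe: "(\<lambda>z. F z * G z) = (\<lambda>(a, b, c, d). X1 a j1 k1 c * X2 i1 j2 a d * X3 b c k2 m1 * X4 i2 d b m2)"
    by (auto simp: fun_eq_iff F_def G_def)
  show "(\<lambda>(a, b, c, d). X1 a j1 k1 c * X2 i1 j2 a d * X3 b c k2 m1 * X4 i2 d b m2) summable_on UNIV"
    using CS_sq(1)[OF sF sG] FGe by simp
  have "(T4 X1 X2 X3 X4 (i1,i2) (j1,j2) (k1,k2) (m1,m2))^2 = (\<Sum>\<^sub>\<infinity>z. F z * G z)^2"
    unfolding T4_apply FGe ..
  also have "\<dots> \<le> (\<Sum>\<^sub>\<infinity>z. (F z)^2) * (\<Sum>\<^sub>\<infinity>z. (G z)^2)" by (rule CS_sq(2)[OF sF sG])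
  also have "\<dots> = (R1 X1 (j1,k1) * R4 X4 (i2,m2)) * (R2 X2 (i1,j2) * R3 X3 (k2,m1))"
    unfolding F2s G2s P14(2) P23(2) R1_def R2_def R3_def R4_def by simp
  finally show "(T4 X1 X2 X3 X4 (i1,i2) (j1,j2) (k1,k2) (m1,m2))^2 \<le>
          R1 X1 (j1,k1) * R2 X2 (i1,j2) * R3 X3 (k2,m1) * R4 X4 (i2,m2)"
    by (simp add: ac_simps)
qed

definition Tf :: "tensor4 \<Rightarrow> tensor4 \<Rightarrow> tensor4 \<Rightarrow> tensor4 \<Rightarrow> (nat \<times> nat) \<times> (nat \<times> nat) \<times> (nat \<times> nat) \<times> (nat \<times> nat) \<Rightarrow> real" where
  "Tf X1 X2 X3 X4 = (\<lambda>(x,y,z,w). T4 X1 X2 X3 X4 x y z w)"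

lemma T4_sqs:
  assumes h1: "hs_fin X1" and h2: "hs_fin X2" and h3: "hs_fin X3" and h4: "hs_fin X4"
  shows "sqs (Tf X1 X2 X3 X4)"
    and "nrm (Tf X1 X2 X3 X4) \<le> hs_norm X1 * hs_norm X2 * hs_norm X3 * hs_norm X4"
proof -
  define Bd where "Bd = (\<lambda>((i1::nat,i2::nat),(j1::nat,j2::nat),(k1::nat,k2::nat),(m1::nat,m2::nat)).
     R1 X1 (j1,k1) * R2 X2 (i1,j2) * R3 X3 (k2,m1) * R4 X4 (i2,m2))"
  note P = prod4_summable[OF R1_facts(2)[OF h1] R2_facts(2)[OF h2] R3_facts(2)[OF h3] R4_facts(2)[OF h4]]
  have Bs: "Bd summable_on UNIV \<longleftrightarrow> (\<lambda>(u1,u2,u3,u4). R1 X1 u1 * R2 X2 u2 * R3 X3 u3 * R4 X4 u4) summable_on UNIV"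
    by (rule summable_on_reindex_bij_witness[where j="\<lambda>((i1,i2),(j1,j2),(k1,k2),(m1,m2)). ((j1,k1),(i1,j2),(k2,m1),(i2,m2))"
          and i="\<lambda>((j1,k1),(i1,j2),(k2,m1),(i2,m2)). ((i1,i2),(j1,j2),(k1,k2),(m1,m2))"])
      (auto simp: Bd_def)
  have Bsum: "infsum Bd UNIV = (\<Sum>\<^sub>\<infinity>(u1,u2,u3,u4). R1 X1 u1 * R2 X2 u2 * R3 X3 u3 * R4 X4 u4)"
    by (rule infsum_reindex_bij_witness[where j="\<lambda>((i1,i2),(j1,j2),(k1,k2),(m1,m2)). ((j1,k1),(i1,j2),(k2,m1),(i2,m2))"
          and i="\<lambda>((j1,k1),(i1,j2),(k2,m1),(i2,m2)). ((i1,i2),(j1,j2),(k1,k2),(m1,m2))"])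
      (auto simp: Bd_def)
  have BS: "Bd summable_on UNIV" using Bs P(1) by simp
  have Bv: "infsum Bd UNIV = (hs_norm X1 * hs_norm X2 * hs_norm X3 * hs_norm X4)^2"
    unfolding Bsum P(2) R1_facts(3)[OF h1] R2_facts(3)[OF h2] R3_facts(3)[OF h3] R4_facts(3)[OF h4]
    by (simp add: power_mult_distrib)
  have le: "(Tf X1 X2 X3 X4 e)^2 \<le> Bd e" for e
    by (cases e) (auto simp: Tf_def Bd_def intro: T4_pt(2)[OF h1 h2 h3 h4])
  have Tsum: "(\<lambda>e. (Tf X1 X2 X3 X4 e)^2) summable_on UNIV"
  proof -
    have Bnn: "0 \<le> Bd e" for e
      by (cases e) (auto simp: Bd_def intro!: mult_nonneg_nonneg R_nonneg)
    have BSa: "(\<lambda>e. norm (Bd e)) summable_on UNIV" using BS Bnn by (simp add: abs_of_nonneg)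
    have "(\<lambda>e. norm ((Tf X1 X2 X3 X4 e)^2)) summable_on UNIV"
      by (rule Infinite_Sum.abs_summable_on_comparison_test[OF BSa])
        (use le Bnn in \<open>auto simp: abs_of_nonneg\<close>)
    then show ?thesis using summable_on_iff_abs_summable_on_real by blast
  qed
  then show "sqs (Tf X1 X2 X3 X4)" unfolding sqs_def .
  have "(\<Sum>\<^sub>\<infinity>e. (Tf X1 X2 X3 X4 e)^2) \<le> infsum Bd UNIV"
    by (rule infsum_mono[OF Tsum BS le])
  then show "nrm (Tf X1 X2 X3 X4) \<le> hs_norm X1 * hs_norm X2 * hs_norm X3 * hs_norm X4"
    unfolding Bv by (intro nrm_le_bound) (auto simp: hs_norm_nrm nrm_nonneg)
qed

lemma prod4_sum:
  fixes a b c d :: "nat \<Rightarrow> real"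
  shows "(\<Sum>t\<in>S. a t) * (\<Sum>t\<in>S. b t) * (\<Sum>t\<in>S. c t) * (\<Sum>t\<in>S. d t) =
    (\<Sum>(t1,t2,t3,t4)\<in>S\<times>S\<times>S\<times>S. a t1 * b t2 * c t3 * d t4)"
proof -
  have "(\<Sum>(t1,t2,t3,t4)\<in>S\<times>S\<times>S\<times>S. a t1 * b t2 * c t3 * d t4) = (\<Sum>t1\<in>S. \<Sum>t2\<in>S. \<Sum>t3\<in>S. \<Sum>t4\<in>S. a t1 * (b t2 * (c t3 * d t4)))"
    by (simp add: sum.cartesian_product mult.assoc)
  also have "\<dots> = (\<Sum>t1\<in>S. a t1 * (\<Sum>t2\<in>S. b t2 * (\<Sum>t3\<in>S. c t3 * (\<Sum>t4\<in>S. d t4))))"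
    by (simp add: sum_distrib_left)
  also have "\<dots> = (\<Sum>t\<in>S. a t) * ((\<Sum>t\<in>S. b t) * ((\<Sum>t\<in>S. c t) * (\<Sum>t\<in>S. d t)))"
    by (simp add: sum_distrib_right)
  finally show ?thesis by (simp add: mult.assoc)
qed

definition Ysum :: "(nat \<Rightarrow> tensor4) \<Rightarrow> nat set \<Rightarrow> tensor4" where
  "Ysum Y S = (\<lambda>i j k l. \<Sum>t\<in>S. Y t i j k l)"

lemma T4_expand:
  assumes fin: "finite S" and hs: "\<And>t. t \<in> S \<Longrightarrow> hs_fin (Y t)"
  shows "T4 (Ysum Y S) (Ysum Y S) (Ysum Y S) (Ysum Y S) x y z w =
     (\<Sum>(t1,t2,t3,t4)\<in>S\<times>S\<times>S\<times>S. T4 (Y t1) (Y t2) (Y t3) (Y t4) x y z w)"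
proof -
  obtain i1 i2 where x: "x = (i1,i2)" by (cases x)
  obtain j1 j2 where y: "y = (j1,j2)" by (cases y)
  obtain k1 k2 where z: "z = (k1,k2)" by (cases z)
  obtain m1 m2 where w: "w = (m1,m2)" by (cases w)
  have e: "(\<lambda>(a, b, c, d). Ysum Y S a j1 k1 c * Ysum Y S i1 j2 a d * Ysum Y S b c k2 m1 * Ysum Y S i2 d b m2)
      = (\<lambda>v. \<Sum>t\<in>S\<times>S\<times>S\<times>S. (\<lambda>t v. case t of (t1,t2,t3,t4) \<Rightarrow> case v of (a, b, c, d) \<Rightarrow>
            Y t1 a j1 k1 c * Y t2 i1 j2 a d * Y t3 b c k2 m1 * Y t4 i2 d b m2) t v)"
    by (auto simp: fun_eq_iff Ysum_def prod4_sum case_prod_beta')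
  have s: "(\<lambda>t v. case t of (t1,t2,t3,t4) \<Rightarrow> case v of (a, b, c, d) \<Rightarrow>
            Y t1 a j1 k1 c * Y t2 i1 j2 a d * Y t3 b c k2 m1 * Y t4 i2 d b m2) t summable_on UNIV"
    if "t \<in> S\<times>S\<times>S\<times>S" for t
    using that T4_pt(1)[OF hs hs hs hs] by (auto simp: case_prod_beta')
  show ?thesis unfolding x y z w T4_apply e
    using infsum_fsum[of "S\<times>S\<times>S\<times>S", OF _ s] fin by (simp add: case_prod_beta')
qed

definition F4 :: "((nat \<Rightarrow> real) \<Rightarrow> (nat \<times> nat \<Rightarrow> real)) \<Rightarrow> tensor4 \<Rightarrow> tensor4 \<Rightarrow> tensor4 \<Rightarrow> tensor4 \<Rightarrow> tensor4" where
  "F4 J X1 X2 X3 X4 p q r s =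
     (\<Sum>\<^sub>\<infinity>(x, y, z, w). Jcoef J x p * Jcoef J y q * Jcoef J z r * Jcoef J w s * T4 X1 X2 X3 X4 x y z w)"

lemma typeI_F4: "typeI J A = F4 J A A A A"
  unfolding typeI_def F4_def blockT_T4 by (intro ext) simp

definition phi :: "((nat \<Rightarrow> real) \<Rightarrow> (nat \<times> nat \<Rightarrow> real)) \<Rightarrow> nat \<times> nat \<times> nat \<times> nat \<Rightarrow> (nat \<times> nat) \<times> (nat \<times> nat) \<times> (nat \<times> nat) \<times> (nat \<times> nat) \<Rightarrow> real" where
  "phi J = (\<lambda>(p,q,r,s) (x,y,z,w). Jv J p x * Jv J q y * Jv J r z * Jv J s w)"

lemma F4_alt: "F4 J X1 X2 X3 X4 p q r s = (\<Sum>\<^sub>\<infinity>e. phi J (p,q,r,s) e * Tf X1 X2 X3 X4 e)"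
proof -
  have "(\<lambda>(x, y, z, w). Jcoef J x p * Jcoef J y q * Jcoef J z r * Jcoef J w s * T4 X1 X2 X3 X4 x y z w)
     = (\<lambda>e. phi J (p,q,r,s) e * Tf X1 X2 X3 X4 e)"
    by (auto simp: fun_eq_iff phi_def Tf_def Jcoef_Jv)
  then show ?thesis unfolding F4_def by simp
qed

context
  fixes J assumes iso: "iso_J J"
begin

lemma phi_sqs: "sqs (phi J i)"
proof -
  obtain p q r s where i: "i = (p,q,r,s)" by (cases i)
  have f: "(\<lambda>x. (Jv J u x)^2) summable_on UNIV" for u using Jv_sqs[OF iso] unfolding sqs_def .
  have "(\<lambda>e. (phi J i e)^2) = (\<lambda>(x,y,z,w). (Jv J p x)^2 * (Jv J q y)^2 * (Jv J r z)^2 * (Jv J s w)^2)"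
    by (auto simp: fun_eq_iff phi_def i power_mult_distrib)
  then show ?thesis unfolding sqs_def using prod4_summable(1)[OF f f f f] by simp
qed

lemma phi_orth: "(\<Sum>\<^sub>\<infinity>e. phi J i e * phi J i' e) = (if i = i' then 1 else 0)"
proof -
  obtain p q r s where i: "i = (p,q,r,s)" by (cases i)
  obtain p' q' r' s' where i': "i' = (p',q',r',s')" by (cases i')
  have f: "(\<lambda>x. Jv J u x * Jv J u' x) summable_on UNIV" for u u'
    using CS_sq(1)[OF Jv_sqs[OF iso] Jv_sqs[OF iso]] .
  have "(\<lambda>e. phi J i e * phi J i' e) = (\<lambda>(x,y,z,w). (Jv J p x * Jv J p' x) * (Jv J q y * Jv J q' y) * (Jv J r z * Jv J r' z) * (Jv J s w * Jv J s' w))"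
    by (auto simp: fun_eq_iff phi_def i i' ac_simps)
  then show ?thesis using prod4_summable(2)[OF f f f f] by (simp add: Jv_orth[OF iso] i i')
qed

lemma uc_F4: "uc (F4 J X1 X2 X3 X4) = (\<lambda>i. \<Sum>\<^sub>\<infinity>e. phi J i e * Tf X1 X2 X3 X4 e)"
  by (auto simp: fun_eq_iff uc_def F4_alt)

lemma F4_hs:
  assumes "hs_fin X1" "hs_fin X2" "hs_fin X3" "hs_fin X4"
  shows "hs_fin (F4 J X1 X2 X3 X4)"
    and "hs_norm (F4 J X1 X2 X3 X4) \<le> hs_norm X1 * hs_norm X2 * hs_norm X3 * hs_norm X4"
proof -
  note B = bessel[of "phi J", OF phi_sqs phi_orth T4_sqs(1)[OF assms]]
  show "hs_fin (F4 J X1 X2 X3 X4)" unfolding hs_fin_sqs uc_F4 by (rule B(1))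
  show "hs_norm (F4 J X1 X2 X3 X4) \<le> hs_norm X1 * hs_norm X2 * hs_norm X3 * hs_norm X4"
    unfolding hs_norm_nrm[of "F4 J X1 X2 X3 X4"] uc_F4 using B(2) T4_sqs(2)[OF assms] by linarith
qed

lemma F4_expand:
  assumes fin: "finite S" and hs: "\<And>t. t \<in> S \<Longrightarrow> hs_fin (Y t)"
  shows "F4 J (Ysum Y S) (Ysum Y S) (Ysum Y S) (Ysum Y S) p q r s =
     (\<Sum>(t1,t2,t3,t4)\<in>S\<times>S\<times>S\<times>S. F4 J (Y t1) (Y t2) (Y t3) (Y t4) p q r s)"
proof -
  have e: "(\<lambda>e. phi J (p,q,r,s) e * Tf (Ysum Y S) (Ysum Y S) (Ysum Y S) (Ysum Y S) e) =
     (\<lambda>e. \<Sum>t\<in>S\<times>S\<times>S\<times>S. (\<lambda>t e. case t of (t1,t2,t3,t4) \<Rightarrow> phi J (p,q,r,s) e * Tf (Y t1) (Y t2) (Y t3) (Y t4) e) t e)"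
    by (auto simp: fun_eq_iff Tf_def T4_expand[OF fin hs] sum_distrib_left case_prod_beta')
  have s: "(\<lambda>t e. case t of (t1,t2,t3,t4) \<Rightarrow> phi J (p,q,r,s) e * Tf (Y t1) (Y t2) (Y t3) (Y t4) e) t summable_on UNIV"
    if "t \<in> S\<times>S\<times>S\<times>S" for t
    using that CS_sq(1)[OF phi_sqs T4_sqs(1)[OF hs hs hs hs]] by (auto simp: case_prod_beta')
  show ?thesis unfolding F4_alt e
    using infsum_fsum[of "S\<times>S\<times>S\<times>S", OF _ s] fin by (simp add: case_prod_beta' F4_alt)
qed

end

definition B2 :: "tensor4 \<Rightarrow> tensor4" where
  "B2 A = (\<lambda>i j k l. A i j k l - Astar i j k l - one_nz_part A i j k l)"

definition sel :: "tensor4 \<Rightarrow> nat \<Rightarrow> tensor4" where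
  "sel A t = (if t = 0 then Astar else if t = 1 then one_nz_part A else B2 A)"

definition cnt :: "nat \<Rightarrow> nat \<Rightarrow> nat \<Rightarrow> nat \<Rightarrow> nat" where
  "cnt i j k l = nnz i + nnz j + nnz k + nnz l"

definition okc :: "nat \<Rightarrow> nat \<Rightarrow> bool" where
  "okc t n \<longleftrightarrow> (if t = 0 then n = 0 else if t = 1 then n = 1 else n \<ge> 2)"

lemma nnz_simps[simp]: "nnz 0 = 0" "i \<noteq> 0 \<Longrightarrow> nnz i = 1"
  unfolding nnz_def by auto

lemma cnt0_iff: "cnt i j k l = 0 \<longleftrightarrow> i = 0 \<and> j = 0 \<and> k = 0 \<and> l = 0"
  unfolding cnt_def nnz_def by auto

lemma sel_nz:
  assumes "sel A t i j k l \<noteq> 0" "A 0 0 0 0 = 1"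
  shows "okc t (cnt i j k l)"
proof -
  consider "t = 0" | "t = 1" | "t \<noteq> 0" "t \<noteq> 1" by blast
  then show ?thesis
  proof cases
    case 1
    then have "i = 0 \<and> j = 0 \<and> k = 0 \<and> l = 0" using assms(1) by (simp add: sel_def Astar_def split: if_splits)
    then show ?thesis using 1 by (simp add: okc_def cnt0_iff)
  next
    case 2
    then have "nnz i + nnz j + nnz k + nnz l = 1" using assms(1) by (simp add: sel_def one_nz_part_def split: if_splits)
    then show ?thesis using 2 by (simp add: okc_def cnt_def)
  next
    case 3
    have "cnt i j k l \<noteq> 0"
    proof
      assume "cnt i j k l = 0"
      then have "i = 0 \<and> j = 0 \<and> k = 0 \<and> l = 0" by (simp add: cnt0_iff)
      then show False using assms 3 by (auto simp: sel_def B2_def Astar_def one_nz_part_def)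
    qed
    moreover have "cnt i j k l \<noteq> 1"
    proof
      assume c1: "cnt i j k l = 1"
      then have "\<not> (i = 0 \<and> j = 0 \<and> k = 0 \<and> l = 0)" using cnt0_iff[of i j k l] by auto
      then have "Astar i j k l = 0" by (auto simp: Astar_def)
      moreover have "one_nz_part A i j k l = A i j k l" using c1 by (simp add: one_nz_part_def cnt_def)
      ultimately show False using assms 3 by (simp add: sel_def B2_def)
    qed
    ultimately show ?thesis using 3 by (auto simp: okc_def)
  qed
qed

definition ordt :: "nat \<Rightarrow> nat" where
  "ordt t = (if t = 0 then 0 else if t = 1 then 2 else 1)"

definition tf :: "nat \<Rightarrow> nat" where
  "tf n = (if n = 0 then 0 else if n = 1 then 1 else 2)"

lemma okc_tf: "okc t n \<Longrightarrow> t \<le> 2 \<Longrightarrow> t = tf n"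
  unfolding okc_def tf_def by (auto split: if_splits)

lemma comb0:
  assumes t: "t1 \<le> 2" "t2 \<le> 2" "t3 \<le> 2" "t4 \<le> 2"
    and o1: "okc t1 (cnt a 0 0 c)" and o2: "okc t2 (cnt 0 0 a d)"
    and o3: "okc t3 (cnt b c 0 0)" and o4: "okc t4 (cnt 0 d b 0)"
  shows "(t1,t2,t3,t4) = (0,0,0,0) \<or> ordt t1 + ordt t2 + ordt t3 + ordt t4 \<ge> 4"
proof -
  have e: "t1 = tf (nnz a + nnz c)" "t2 = tf (nnz a + nnz d)" "t3 = tf (nnz b + nnz c)" "t4 = tf (nnz d + nnz b)"
    using okc_tf[OF o1 t(1)] okc_tf[OF o2 t(2)] okc_tf[OF o3 t(3)] okc_tf[OF o4 t(4)]
    by (simp_all add: cnt_def)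
  show ?thesis unfolding e
    by (cases "a = 0"; cases "b = 0"; cases "c = 0"; cases "d = 0") (simp_all add: tf_def ordt_def)
qed

lemma F4_nz:
  assumes "F4 J X1 X2 X3 X4 p q r s \<noteq> 0"
  shows "\<exists>i1 i2 j1 j2 k1 k2 m1 m2 a b c d. Jv J p (i1,i2) \<noteq> 0 \<and> Jv J q (j1,j2) \<noteq> 0 \<and>
     Jv J r (k1,k2) \<noteq> 0 \<and> Jv J s (m1,m2) \<noteq> 0 \<and> X1 a j1 k1 c \<noteq> 0 \<and> X2 i1 j2 a d \<noteq> 0 \<and>
     X3 b c k2 m1 \<noteq> 0 \<and> X4 i2 d b m2 \<noteq> 0"
proof (rule ccontr)
  assume N: "\<not> ?thesis"
  have "(\<lambda>(x, y, z, w). Jcoef J x p * Jcoef J y q * Jcoef J z r * Jcoef J w s * T4 X1 X2 X3 X4 x y z w) = (\<lambda>_. 0)"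
  proof (rule ext, clarify)
    fix i1 i2 j1 j2 k1 k2 m1 m2
    show "Jcoef J (i1,i2) p * Jcoef J (j1,j2) q * Jcoef J (k1,k2) r * Jcoef J (m1,m2) s * T4 X1 X2 X3 X4 (i1,i2) (j1,j2) (k1,k2) (m1,m2) = 0"
    proof (cases "Jv J p (i1,i2) \<noteq> 0 \<and> Jv J q (j1,j2) \<noteq> 0 \<and> Jv J r (k1,k2) \<noteq> 0 \<and> Jv J s (m1,m2) \<noteq> 0")
      case True
      have z: "X1 a j1 k1 c * X2 i1 j2 a d * X3 b c k2 m1 * X4 i2 d b m2 = 0" for a b c d
      proof (rule ccontr)
        assume "X1 a j1 k1 c * X2 i1 j2 a d * X3 b c k2 m1 * X4 i2 d b m2 \<noteq> 0"
        then have "X1 a j1 k1 c \<noteq> 0" "X2 i1 j2 a d \<noteq> 0" "X3 b c k2 m1 \<noteq> 0" "X4 i2 d b m2 \<noteq> 0" by auto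
        then show False using N True by blast
      qed
      have "(\<lambda>(a, b, c, d). X1 a j1 k1 c * X2 i1 j2 a d * X3 b c k2 m1 * X4 i2 d b m2) = (\<lambda>_. 0)"
        using z by (auto simp: fun_eq_iff)
      then have "T4 X1 X2 X3 X4 (i1,i2) (j1,j2) (k1,k2) (m1,m2) = 0" unfolding T4_apply by simp
      then show ?thesis by simp
    next
      case False
      then show ?thesis by (auto simp: Jcoef_Jv)
    qed
  qed
  then have "F4 J X1 X2 X3 X4 p q r s = 0" unfolding F4_def by simp
  then show False using assms by simp
qed

context
  fixes J assumes iso: "iso_J J"
begin

lemma Jv_nz_00: "Jv J p (0,0) \<noteq> 0 \<Longrightarrow> p = 0"
  using Jv_00[OF iso] by (auto split: if_splits)

lemma Jv_nz_other: "Jv J p (u,v) \<noteq> 0 \<Longrightarrow> (u,v) \<noteq> (0,0) \<Longrightarrow> p \<noteq> 0"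
  using Jv0_apply[OF iso, of "(u,v)"] by (cases "p = 0") auto

lemma Jv_nz_0: "Jv J 0 (u,v) \<noteq> 0 \<Longrightarrow> u = 0 \<and> v = 0"
  using Jv0_apply[OF iso] by (auto split: if_splits)

lemma F4_zero_0000:
  assumes A0: "A 0 0 0 0 = 1" and t: "t1 \<le> 2" "t2 \<le> 2" "t3 \<le> 2" "t4 \<le> 2"
    and nz: "(t1,t2,t3,t4) \<noteq> (0,0,0,0)" and low: "ordt t1 + ordt t2 + ordt t3 + ordt t4 < 4"
  shows "F4 J (sel A t1) (sel A t2) (sel A t3) (sel A t4) 0 0 0 0 = 0"
proof (rule ccontr)
  assume "F4 J (sel A t1) (sel A t2) (sel A t3) (sel A t4) 0 0 0 0 \<noteq> 0"
  from F4_nz[OF this] obtain i1 i2 j1 j2 k1 k2 m1 m2 a b c d where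
    H: "Jv J 0 (i1,i2) \<noteq> 0" "Jv J 0 (j1,j2) \<noteq> 0" "Jv J 0 (k1,k2) \<noteq> 0" "Jv J 0 (m1,m2) \<noteq> 0"
       "sel A t1 a j1 k1 c \<noteq> 0" "sel A t2 i1 j2 a d \<noteq> 0" "sel A t3 b c k2 m1 \<noteq> 0" "sel A t4 i2 d b m2 \<noteq> 0"
    by blast
  have z: "i1 = 0" "i2 = 0" "j1 = 0" "j2 = 0" "k1 = 0" "k2 = 0" "m1 = 0" "m2 = 0"
    using Jv_nz_0[OF H(1)] Jv_nz_0[OF H(2)] Jv_nz_0[OF H(3)] Jv_nz_0[OF H(4)] by auto
  have "okc t1 (cnt a 0 0 c)" "okc t2 (cnt 0 0 a d)" "okc t3 (cnt b c 0 0)" "okc t4 (cnt 0 d b 0)"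
    using sel_nz[OF H(5) A0] sel_nz[OF H(6) A0] sel_nz[OF H(7) A0] sel_nz[OF H(8) A0] z by auto
  from comb0[OF t this] nz low show False by auto
qed

lemma okc2: "okc 2 (cnt i j k l) \<Longrightarrow> cnt i j k l \<ge> 2" by (simp add: okc_def)
lemma okc0: "okc 0 (cnt i j k l) \<Longrightarrow> i = 0 \<and> j = 0 \<and> k = 0 \<and> l = 0" by (simp add: okc_def cnt0_iff)
lemma cnt_two: "cnt 0 j k 0 \<ge> 2 \<Longrightarrow> j \<noteq> 0 \<and> k \<noteq> 0" "cnt i j 0 0 \<ge> 2 \<Longrightarrow> i \<noteq> 0 \<and> j \<noteq> 0"
  "cnt 0 0 k l \<ge> 2 \<Longrightarrow> k \<noteq> 0 \<and> l \<noteq> 0" "cnt i 0 0 l \<ge> 2 \<Longrightarrow> i \<noteq> 0 \<and> l \<noteq> 0"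
  by (auto simp: cnt_def nnz_def simp del: nnz_simps split: if_splits)

lemma single_support:
  assumes A0: "A 0 0 0 0 = 1"
    and t: "(t1,t2,t3,t4) \<in> {(2,0,0,0),(0,2,0,0),(0,0,2,0),(0,0,0,2)}"
    and nz: "F4 J (sel A t1) (sel A t2) (sel A t3) (sel A t4) p q r s \<noteq> 0"
  shows "corner p q r s"
proof -
  from F4_nz[OF nz] obtain i1 i2 j1 j2 k1 k2 m1 m2 a b c d where
    H: "Jv J p (i1,i2) \<noteq> 0" "Jv J q (j1,j2) \<noteq> 0" "Jv J r (k1,k2) \<noteq> 0" "Jv J s (m1,m2) \<noteq> 0"
       "sel A t1 a j1 k1 c \<noteq> 0" "sel A t2 i1 j2 a d \<noteq> 0" "sel A t3 b c k2 m1 \<noteq> 0" "sel A t4 i2 d b m2 \<noteq> 0"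
    by blast
  note o = sel_nz[OF H(5) A0] sel_nz[OF H(6) A0] sel_nz[OF H(7) A0] sel_nz[OF H(8) A0]
  from t consider "(t1,t2,t3,t4) = (2,0,0,0)" | "(t1,t2,t3,t4) = (0,2,0,0)" | "(t1,t2,t3,t4) = (0,0,2,0)" | "(t1,t2,t3,t4) = (0,0,0,2)"
    by blast
  then show ?thesis
  proof cases
    case 1
    then have tt: "t1 = 2" "t2 = 0" "t3 = 0" "t4 = 0" by auto
    note o = o[unfolded tt]
    have z: "i1 = 0" "j2 = 0" "a = 0" "d = 0" "b = 0" "c = 0" "k2 = 0" "m1 = 0" "i2 = 0" "m2 = 0"
      using okc0[OF o(2)] okc0[OF o(3)] okc0[OF o(4)] by auto
    have "okc 2 (cnt 0 j1 k1 0)" using o(1) z by simp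
    then have "j1 \<noteq> 0 \<and> k1 \<noteq> 0" by (rule cnt_two(1)[OF okc2])
    then show ?thesis using H(1-4) z Jv_nz_00 Jv_nz_other unfolding corner_def by (metis Pair_inject less_one not_less)
  next
    case 2
    then have tt: "t1 = 0" "t2 = 2" "t3 = 0" "t4 = 0" by auto
    note o = o[unfolded tt]
    have z: "a = 0" "j1 = 0" "k1 = 0" "c = 0" "b = 0" "k2 = 0" "m1 = 0" "i2 = 0" "d = 0" "m2 = 0"
      using okc0[OF o(1)] okc0[OF o(3)] okc0[OF o(4)] by auto
    have "okc 2 (cnt i1 j2 0 0)" using o(2) z by simp
    then have "i1 \<noteq> 0 \<and> j2 \<noteq> 0" by (rule cnt_two(2)[OF okc2])
    then show ?thesis using H(1-4) z Jv_nz_00 Jv_nz_other unfolding corner_def by (metis Pair_inject less_one not_less)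
  next
    case 3
    then have tt: "t1 = 0" "t2 = 0" "t3 = 2" "t4 = 0" by auto
    note o = o[unfolded tt]
    have z: "a = 0" "j1 = 0" "k1 = 0" "c = 0" "i1 = 0" "j2 = 0" "d = 0" "i2 = 0" "b = 0" "m2 = 0"
      using okc0[OF o(1)] okc0[OF o(2)] okc0[OF o(4)] by auto
    have "okc 2 (cnt 0 0 k2 m1)" using o(3) z by simp
    then have "k2 \<noteq> 0 \<and> m1 \<noteq> 0" by (rule cnt_two(3)[OF okc2])
    then show ?thesis using H(1-4) z Jv_nz_00 Jv_nz_other unfolding corner_def by (metis Pair_inject less_one not_less)
  next
    case 4
    then have tt: "t1 = 0" "t2 = 0" "t3 = 0" "t4 = 2" by auto
    note o = o[unfolded tt]
    have z: "a = 0" "j1 = 0" "k1 = 0" "c = 0" "i1 = 0" "j2 = 0" "d = 0" "b = 0" "k2 = 0" "m1 = 0"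
      using okc0[OF o(1)] okc0[OF o(2)] okc0[OF o(3)] by auto
    have "okc 2 (cnt i2 0 0 m2)" using o(4) z by simp
    then have "i2 \<noteq> 0 \<and> m2 \<noteq> 0" by (rule cnt_two(4)[OF okc2])
    then show ?thesis using H(1-4) z Jv_nz_00 Jv_nz_other unfolding corner_def by (metis Pair_inject less_one not_less)
  qed
qed

end

lemma uc_ext: "uc (\<lambda>i j k l. f (i,j,k,l)) = f"
  by (auto simp: fun_eq_iff uc_def)

lemma hs_sum:
  assumes "finite S" "\<And>t. t \<in> S \<Longrightarrow> hs_fin (X t)"
  shows "hs_fin (\<lambda>p q r s. \<Sum>t\<in>S. X t p q r s)" "hs_norm (\<lambda>p q r s. \<Sum>t\<in>S. X t p q r s) \<le> (\<Sum>t\<in>S. hs_norm (X t))"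
proof -
  have e: "uc (\<lambda>p q r s. \<Sum>t\<in>S. X t p q r s) = (\<lambda>x. \<Sum>t\<in>S. uc (X t) x)"
    by (auto simp: fun_eq_iff uc_def)
  note H = sqs_sum[OF assms(1), of "\<lambda>t. uc (X t)"]
  show "hs_fin (\<lambda>p q r s. \<Sum>t\<in>S. X t p q r s)" unfolding hs_fin_sqs e using H assms(2) by (auto simp: hs_fin_sqs)
  show "hs_norm (\<lambda>p q r s. \<Sum>t\<in>S. X t p q r s) \<le> (\<Sum>t\<in>S. hs_norm (X t))"
    unfolding hs_norm_nrm e using H assms(2) by (auto simp: hs_fin_sqs)
qed

lemma hs_add:
  assumes "hs_fin X" "hs_fin Y"
  shows "hs_fin (\<lambda>p q r s. X p q r s + Y p q r s)" "hs_norm (\<lambda>p q r s. X p q r s + Y p q r s) \<le> hs_norm X + hs_norm Y"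
proof -
  have e: "uc (\<lambda>p q r s. X p q r s + Y p q r s) = (\<lambda>x. uc X x + uc Y x)"
    by (auto simp: fun_eq_iff uc_def)
  show "hs_fin (\<lambda>p q r s. X p q r s + Y p q r s)" unfolding hs_fin_sqs e
    using sqs_add(1) assms by (auto simp: hs_fin_sqs)
  show "hs_norm (\<lambda>p q r s. X p q r s + Y p q r s) \<le> hs_norm X + hs_norm Y" unfolding hs_norm_nrm e
    using sqs_add(2) assms by (auto simp: hs_fin_sqs)
qed

lemma hs_scale:
  assumes "hs_fin X"
  shows "hs_fin (\<lambda>p q r s. c * X p q r s)" "hs_norm (\<lambda>p q r s. c * X p q r s) = \<bar>c\<bar> * hs_norm X"
proof -
  have e: "uc (\<lambda>p q r s. c * X p q r s) = (\<lambda>x. c * uc X x)"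
    by (auto simp: fun_eq_iff uc_def)
  show "hs_fin (\<lambda>p q r s. c * X p q r s)" unfolding hs_fin_sqs e
    using sqs_scale(1) assms by (auto simp: hs_fin_sqs)
  show "hs_norm (\<lambda>p q r s. c * X p q r s) = \<bar>c\<bar> * hs_norm X" unfolding hs_norm_nrm e
    using sqs_scale(2) assms by (auto simp: hs_fin_sqs)
qed

lemma hs_mono:
  assumes "hs_fin X" "\<And>p q r s. \<bar>Y p q r s\<bar> \<le> \<bar>X p q r s\<bar>"
  shows "hs_fin Y" "hs_norm Y \<le> hs_norm X"
proof -
  have le: "\<bar>uc Y x\<bar> \<le> \<bar>uc X x\<bar>" for x using assms(2) by (cases x) auto
  show "hs_fin Y" using sqs_mono(1)[OF _ le] assms(1) by (simp add: hs_fin_sqs)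
  show "hs_norm Y \<le> hs_norm X" using sqs_mono(2)[OF _ le] assms(1) by (simp add: hs_fin_sqs hs_norm_nrm)
qed

lemma abs_le_hs:
  assumes "hs_fin X" shows "\<bar>X p q r s\<bar> \<le> hs_norm X"
  using abs_le_nrm[of "uc X" "(p,q,r,s)"] assms by (simp add: hs_fin_sqs hs_norm_nrm)

lemma hs_nonneg: "0 \<le> hs_norm X"
  by (simp add: hs_norm_nrm nrm_nonneg)

lemma Astar_uc: "uc Astar = (\<lambda>x. if x = (0,0,0,0) then 1 else 0)"
  by (auto simp: fun_eq_iff uc_def Astar_def)

lemma Astar_hs: "hs_fin Astar" "hs_norm Astar = 1"
proof -
  have e: "(\<lambda>x. (uc Astar x)^2) = (\<lambda>x. if x = (0::nat,0::nat,0::nat,0::nat) then 1 else (0::real))"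
    by (auto simp: Astar_uc)
  have "(\<lambda>x. if x = (0::nat,0::nat,0::nat,0::nat) then 1 else (0::real)) summable_on UNIV"
    by (rule summable_on_cong_neutral[where T="{(0,0,0,0)}" and g="\<lambda>_. 1", THEN iffD2]) auto
  then show "hs_fin Astar" unfolding hs_fin_sqs sqs_def e .
  show "hs_norm Astar = 1" unfolding hs_norm_nrm nrm_def e by (simp add: infsum_single)
qed

context
  fixes K \<epsilon> :: real and A :: tensor4
  assumes A2: "condA2 K \<epsilon> A"
begin

lemma A_hs: "hs_fin A" and A0: "A 0 0 0 0 = 1"
  using A2 unfolding condA2_def condA1_def by auto

lemma B1_hs: "hs_fin (one_nz_part A)" "hs_norm (one_nz_part A) \<le> K * \<epsilon>^2"
proof -
  show "hs_fin (one_nz_part A)" by (rule hs_mono(1)[OF A_hs]) (auto simp: one_nz_part_def)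
  show "hs_norm (one_nz_part A) \<le> K * \<epsilon>^2" using A2 unfolding condA2_def by simp
qed

lemma D_hs: "hs_fin (\<lambda>i j k l. A i j k l - Astar i j k l)" "hs_norm (\<lambda>i j k l. A i j k l - Astar i j k l) \<le> K * \<epsilon>"
proof -
  have "hs_fin (\<lambda>i j k l. A i j k l + (-1) * Astar i j k l)"
    by (rule hs_add(1)[OF A_hs hs_scale(1)[OF Astar_hs(1)]])
  then show "hs_fin (\<lambda>i j k l. A i j k l - Astar i j k l)" by simp
  show "hs_norm (\<lambda>i j k l. A i j k l - Astar i j k l) \<le> K * \<epsilon>"
    using A2 unfolding condA2_def condA1_def by simp
qed

lemma B2_hs: "hs_fin (B2 A)" "hs_norm (B2 A) \<le> K * \<epsilon>"
proof -
  have le: "\<bar>B2 A i j k l\<bar> \<le> \<bar>A i j k l - Astar i j k l\<bar>" for i j k l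
  proof (cases "nnz i + nnz j + nnz k + nnz l = 1")
    case True
    then have "cnt i j k l = 1" by (simp add: cnt_def)
    then have "\<not> (i = 0 \<and> j = 0 \<and> k = 0 \<and> l = 0)" using cnt0_iff[of i j k l] by auto
    then show ?thesis using True by (auto simp: B2_def one_nz_part_def Astar_def)
  next
    case False
    then show ?thesis by (simp add: B2_def one_nz_part_def)
  qed
  show "hs_fin (B2 A)" by (rule hs_mono(1)[OF D_hs(1) le])
  show "hs_norm (B2 A) \<le> K * \<epsilon>" using hs_mono(2)[OF D_hs(1) le] D_hs(2) by linarith
qed

lemma sel_hs: "hs_fin (sel A t)"
  by (auto simp: sel_def Astar_hs B1_hs B2_hs)

lemma Ysum_sel: "Ysum (sel A) {0,1,2} = A"
  by (auto simp: fun_eq_iff Ysum_def sel_def B2_def)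

lemma sel_norm:
  assumes "0 < \<epsilon>" "\<epsilon> \<le> 1" "0 < K"
  shows "hs_norm (sel A t) \<le> (1 + K) * \<epsilon> ^ ordt t"
proof -
  consider "t = 0" | "t = 1" | "t \<noteq> 0" "t \<noteq> 1" by blast
  then show ?thesis
  proof cases
    case 1
    then show ?thesis using assms by (simp add: sel_def ordt_def Astar_hs)
  next
    case 2
    have "K * \<epsilon>^2 \<le> (1 + K) * \<epsilon>^2" using assms by (intro mult_right_mono) auto
    then show ?thesis using 2 B1_hs(2) by (simp add: sel_def ordt_def)
  next
    case 3
    have "K * \<epsilon> \<le> (1 + K) * \<epsilon>" using assms by (intro mult_right_mono) auto
    then show ?thesis using 3 B2_hs(2) by (simp add: sel_def ordt_def)
  qed
qed

end

lemma T4_Astar: "T4 Astar Astar Astar Astar x y z w = (if x = (0,0) \<and> y = (0,0) \<and> z = (0,0) \<and> w = (0,0) then 1 else 0)"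
proof -
  obtain i1 i2 where x: "x = (i1,i2)" by (cases x)
  obtain j1 j2 where y: "y = (j1,j2)" by (cases y)
  obtain k1 k2 where z: "z = (k1,k2)" by (cases z)
  obtain m1 m2 where w: "w = (m1,m2)" by (cases w)
  have "(\<lambda>(a, b, c, d). Astar a j1 k1 c * Astar i1 j2 a d * Astar b c k2 m1 * Astar i2 d b m2) =
     (\<lambda>v. if v = (0,0,0,0) then (if x = (0,0) \<and> y = (0,0) \<and> z = (0,0) \<and> w = (0,0) then 1 else 0) else 0)"
    by (auto simp: fun_eq_iff Astar_def x y z w)
  then show ?thesis unfolding x y z w T4_apply by (simp add: infsum_single)
qed

lemma F4_Astar:
  assumes iso: "iso_J J"
  shows "F4 J Astar Astar Astar Astar p q r s = Astar p q r s"
proof -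
  have "(\<lambda>(x, y, z, w). Jcoef J x p * Jcoef J y q * Jcoef J z r * Jcoef J w s * T4 Astar Astar Astar Astar x y z w) =
      (\<lambda>e. if e = ((0,0),(0,0),(0,0),(0,0)) then Jv J p (0,0) * Jv J q (0,0) * Jv J r (0,0) * Jv J s (0,0) else 0)"
    by (auto simp: fun_eq_iff T4_Astar Jcoef_Jv)
  then show ?thesis unfolding F4_def by (simp add: infsum_single Jv_00[OF iso] Astar_def)
qed

definition SS :: "nat set" where "SS = {0,1,2}"
definition TT :: "(nat \<times> nat \<times> nat \<times> nat) set" where "TT = SS \<times> SS \<times> SS \<times> SS"
definition Sing :: "(nat \<times> nat \<times> nat \<times> nat) set" where
  "Sing = {(2,0,0,0),(0,2,0,0),(0,0,2,0),(0,0,0,2)}"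
definition os :: "nat \<times> nat \<times> nat \<times> nat \<Rightarrow> nat" where
  "os = (\<lambda>(t1,t2,t3,t4). ordt t1 + ordt t2 + ordt t3 + ordt t4)"
definition GG :: "((nat \<Rightarrow> real) \<Rightarrow> (nat \<times> nat \<Rightarrow> real)) \<Rightarrow> tensor4 \<Rightarrow> nat \<times> nat \<times> nat \<times> nat \<Rightarrow> tensor4" where
  "GG J A = (\<lambda>(t1,t2,t3,t4). F4 J (sel A t1) (sel A t2) (sel A t3) (sel A t4))"

lemma TT_fin: "finite TT" and TT_card: "card TT = 81"
  unfolding TT_def SS_def by (auto simp: card_cartesian_product)

lemma Sing_sub: "Sing \<subseteq> TT" and zero_TT: "(0,0,0,0) \<in> TT" and zero_Sing: "(0,0,0,0) \<notin> Sing"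
  and Sing_fin: "finite Sing" and Sing_card: "card Sing = 4"
  unfolding Sing_def TT_def SS_def by auto

lemma os_Sing: "t \<in> Sing \<Longrightarrow> os t = 1"
  unfolding Sing_def os_def ordt_def by auto

lemma os_rest':
  assumes "t1 \<in> SS" "t2 \<in> SS" "t3 \<in> SS" "t4 \<in> SS" "(t1,t2,t3,t4) \<noteq> (0,0,0,0)" "(t1,t2,t3,t4) \<notin> Sing"
  shows "2 \<le> ordt t1 + ordt t2 + ordt t3 + ordt t4"
  using assms unfolding SS_def Sing_def by (elim insertE emptyE) (simp_all add: ordt_def)

lemma os_rest:
  assumes "t \<in> TT" "t \<noteq> (0,0,0,0)" "t \<notin> Sing" shows "2 \<le> os t"
proof -
  obtain t1 t2 t3 t4 where t: "t = (t1,t2,t3,t4)" by (cases t)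
  have "t1 \<in> SS" "t2 \<in> SS" "t3 \<in> SS" "t4 \<in> SS" using assms(1) unfolding t TT_def by auto
  from os_rest'[OF this] assms(2,3) show ?thesis unfolding t os_def by simp
qed

lemma TT_le2: "(t1,t2,t3,t4) \<in> TT \<Longrightarrow> t1 \<le> 2 \<and> t2 \<le> 2 \<and> t3 \<le> 2 \<and> t4 \<le> 2"
  unfolding TT_def SS_def by auto

context
  fixes J K \<epsilon> A
  assumes iso: "iso_J J" and A2: "condA2 K \<epsilon> A" and eps: "0 < \<epsilon>" "\<epsilon> \<le> 1" and Kpos: "0 < K"
begin

lemma GG_hs: "hs_fin (GG J A t)" "hs_norm (GG J A t) \<le> (1 + K)^4 * \<epsilon> ^ os t"
proof -
  obtain t1 t2 t3 t4 where t: "t = (t1,t2,t3,t4)" by (cases t)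
  note sh = sel_hs[OF A2]
  show "hs_fin (GG J A t)" unfolding t GG_def by (simp add: F4_hs(1)[OF iso sh sh sh sh])
  have "hs_norm (GG J A t) \<le> hs_norm (sel A t1) * hs_norm (sel A t2) * hs_norm (sel A t3) * hs_norm (sel A t4)"
    unfolding t GG_def by (simp add: F4_hs(2)[OF iso sh sh sh sh])
  also have "\<dots> \<le> ((1 + K) * \<epsilon> ^ ordt t1) * ((1 + K) * \<epsilon> ^ ordt t2) * ((1 + K) * \<epsilon> ^ ordt t3) * ((1 + K) * \<epsilon> ^ ordt t4)"
    using sel_norm[OF A2 eps Kpos] eps Kpos
    by (intro mult_mono) (auto simp: hs_nonneg)
  also have "\<dots> = (1 + K)^4 * \<epsilon> ^ os t"
    unfolding t os_def by (simp add: power_add power4_eq_xxxx ac_simps)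
  finally show "hs_norm (GG J A t) \<le> (1 + K)^4 * \<epsilon> ^ os t" .
qed

lemma GG0: "GG J A (0,0,0,0) = Astar"
  unfolding GG_def by (auto simp: fun_eq_iff sel_def F4_Astar[OF iso])

lemma GG_zero:
  assumes "t \<in> TT" "t \<noteq> (0,0,0,0)" "os t < 4" shows "GG J A t 0 0 0 0 = 0"
proof -
  obtain t1 t2 t3 t4 where t: "t = (t1,t2,t3,t4)" by (cases t)
  have le: "t1 \<le> 2" "t2 \<le> 2" "t3 \<le> 2" "t4 \<le> 2" using TT_le2 assms(1) unfolding t by auto
  show ?thesis using F4_zero_0000[OF iso, where A=A, OF A0[OF A2] le] assms(2,3) unfolding t GG_def os_def by simp
qed

lemma GG_sing:
  assumes "t \<in> Sing" "GG J A t p q r s \<noteq> 0" shows "corner p q r s"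
proof -
  obtain t1 t2 t3 t4 where t: "t = (t1,t2,t3,t4)" by (cases t)
  have m: "(t1,t2,t3,t4) \<in> {(2,0,0,0),(0,2,0,0),(0,0,2,0),(0,0,0,2)}" using assms(1) unfolding t Sing_def .
  have nz: "F4 J (sel A t1) (sel A t2) (sel A t3) (sel A t4) p q r s \<noteq> 0" using assms(2) unfolding t GG_def by simp
  show ?thesis by (rule single_support[OF iso, where A=A, OF A0[OF A2] m nz])
qed

lemma typeI_sum: "typeI J A p q r s = (\<Sum>t\<in>TT. GG J A t p q r s)"
proof -
  have Y: "Ysum (sel A) SS = A" unfolding SS_def by (rule Ysum_sel[OF A2])
  have "typeI J A p q r s = F4 J (Ysum (sel A) SS) (Ysum (sel A) SS) (Ysum (sel A) SS) (Ysum (sel A) SS) p q r s"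
    by (simp only: Y typeI_F4)
  also have "\<dots> = (\<Sum>(t1,t2,t3,t4)\<in>SS\<times>SS\<times>SS\<times>SS. F4 J (sel A t1) (sel A t2) (sel A t3) (sel A t4) p q r s)"
    by (rule F4_expand[OF iso]) (auto simp: SS_def sel_hs[OF A2])
  also have "\<dots> = (\<Sum>t\<in>TT. GG J A t p q r s)"
    unfolding TT_def GG_def by (intro sum.cong refl) auto
  finally show ?thesis .
qed

end

context
  fixes J K \<epsilon> A
  assumes iso: "iso_J J" and A2: "condA2 K \<epsilon> A" and eps: "0 < \<epsilon>" "\<epsilon> \<le> 1" and Kpos: "0 < K"
    and small: "\<epsilon> * (1 + K) \<le> 1/4"
begin

definition "Rest = TT - insert (0,0,0,0) Sing"

lemma Rest_fin: "finite Rest" and Rest_card: "card Rest \<le> 81"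
proof -
  show "finite Rest" unfolding Rest_def using TT_fin by simp
  have "card Rest \<le> card TT" unfolding Rest_def by (rule card_mono[OF TT_fin]) auto
  then show "card Rest \<le> 81" using TT_card by simp
qed

lemma TT_split: "TT = insert (0,0,0,0) (Sing \<union> Rest)" "(0,0,0,0) \<notin> Sing \<union> Rest" "Sing \<inter> Rest = {}"
  unfolding Rest_def using Sing_sub zero_TT zero_Sing by auto

lemma decomp: "typeI J A p q r s = Astar p q r s + (\<Sum>t\<in>Sing. GG J A t p q r s) + (\<Sum>t\<in>Rest. GG J A t p q r s)"
proof -
  have "typeI J A p q r s = (\<Sum>t\<in>insert (0,0,0,0) (Sing \<union> Rest). GG J A t p q r s)"
    unfolding typeI_sum[OF iso A2 eps Kpos] TT_split(1)[symmetric] ..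
  also have "\<dots> = GG J A (0,0,0,0) p q r s + (\<Sum>t\<in>Sing \<union> Rest. GG J A t p q r s)"
    by (rule sum.insert) (use TT_split(2) Sing_fin Rest_fin in auto)
  also have "(\<Sum>t\<in>Sing \<union> Rest. GG J A t p q r s) = (\<Sum>t\<in>Sing. GG J A t p q r s) + (\<Sum>t\<in>Rest. GG J A t p q r s)"
    by (rule sum.union_disjoint[OF Sing_fin Rest_fin TT_split(3)])
  finally show ?thesis by (simp add: GG0[OF iso A2 eps Kpos])
qed

lemma Meps: "(1 + K)^4 * \<epsilon>^4 \<le> 1/256"
proof -
  have "(1 + K)^4 * \<epsilon>^4 = (\<epsilon> * (1 + K))^4" by (simp add: power_mult_distrib)
  also have "\<dots> \<le> (1/4)^4" by (rule power_mono[OF small]) (use eps Kpos in auto)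
  finally show ?thesis by (simp add: power_divide)
qed

lemma c_bound: "\<bar>typeI J A 0 0 0 0 - 1\<bar> \<le> 81 * (1 + K)^4 * \<epsilon>^4"
proof -
  have "typeI J A 0 0 0 0 = (\<Sum>t\<in>TT. GG J A t 0 0 0 0)" by (rule typeI_sum[OF iso A2 eps Kpos])
  also have "\<dots> = GG J A (0,0,0,0) 0 0 0 0 + (\<Sum>t\<in>TT - {(0,0,0,0)}. GG J A t 0 0 0 0)"
    by (rule sum.remove[OF TT_fin zero_TT])
  finally have e: "typeI J A 0 0 0 0 - 1 = (\<Sum>t\<in>TT - {(0,0,0,0)}. GG J A t 0 0 0 0)"
    by (simp add: GG0[OF iso A2 eps Kpos] Astar_def)
  have b: "\<bar>GG J A t 0 0 0 0\<bar> \<le> (1 + K)^4 * \<epsilon>^4" if t: "t \<in> TT - {(0,0,0,0)}" for t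
  proof (cases "os t < 4")
    case True
    then show ?thesis using GG_zero[OF iso A2 eps Kpos] t Kpos eps by auto
  next
    case False
    have "\<bar>GG J A t 0 0 0 0\<bar> \<le> hs_norm (GG J A t)" by (rule abs_le_hs[OF GG_hs(1)[OF iso A2 eps Kpos]])
    also have "\<dots> \<le> (1 + K)^4 * \<epsilon> ^ os t" by (rule GG_hs(2)[OF iso A2 eps Kpos])
    also have "\<dots> \<le> (1 + K)^4 * \<epsilon>^4"
      using False eps Kpos by (intro mult_left_mono power_decreasing) auto
    finally show ?thesis .
  qed
  have "\<bar>\<Sum>t\<in>TT - {(0,0,0,0)}. GG J A t 0 0 0 0\<bar> \<le> (\<Sum>t\<in>TT - {(0,0,0,0)}. \<bar>GG J A t 0 0 0 0\<bar>)"
    by (rule sum_abs)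
  also have "\<dots> \<le> of_nat (card (TT - {(0,0,0,0)})) * ((1 + K)^4 * \<epsilon>^4)"
    by (rule sum_bounded_above) (use b in auto)
  also have "\<dots> \<le> 81 * ((1 + K)^4 * \<epsilon>^4)"
  proof (rule mult_right_mono)
    have "card (TT - {(0,0,0,0)}) \<le> card TT" by (rule card_mono[OF TT_fin]) auto
    then show "real (card (TT - {(0,0,0,0)})) \<le> 81" using TT_card by simp
  qed (use eps Kpos in auto)
  finally show ?thesis unfolding e by simp
qed

lemma c_ge: "typeI J A 0 0 0 0 \<ge> 1/2"
  using c_bound Meps by linarith

lemma P0_hs: "hs_fin (\<lambda>p q r s. \<Sum>t\<in>Sing. GG J A t p q r s)"
     "hs_norm (\<lambda>p q r s. \<Sum>t\<in>Sing. GG J A t p q r s) \<le> 4 * (1 + K)^4 * \<epsilon>"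
proof -
  show "hs_fin (\<lambda>p q r s. \<Sum>t\<in>Sing. GG J A t p q r s)"
    by (rule hs_sum(1)[OF Sing_fin GG_hs(1)[OF iso A2 eps Kpos]])
  have "hs_norm (\<lambda>p q r s. \<Sum>t\<in>Sing. GG J A t p q r s) \<le> (\<Sum>t\<in>Sing. hs_norm (GG J A t))"
    by (rule hs_sum(2)[OF Sing_fin GG_hs(1)[OF iso A2 eps Kpos]])
  also have "\<dots> \<le> of_nat (card Sing) * ((1 + K)^4 * \<epsilon>)"
  proof (rule sum_bounded_above)
    fix t assume "t \<in> Sing"
    then show "hs_norm (GG J A t) \<le> (1 + K)^4 * \<epsilon>"
      using GG_hs(2)[OF iso A2 eps Kpos, of t] os_Sing[of t] by simp
  qed
  finally show "hs_norm (\<lambda>p q r s. \<Sum>t\<in>Sing. GG J A t p q r s) \<le> 4 * (1 + K)^4 * \<epsilon>"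
    by (simp add: Sing_card)
qed

lemma R_hs: "hs_fin (\<lambda>p q r s. \<Sum>t\<in>Rest. GG J A t p q r s)"
     "hs_norm (\<lambda>p q r s. \<Sum>t\<in>Rest. GG J A t p q r s) \<le> 81 * (1 + K)^4 * \<epsilon>^2"
proof -
  show "hs_fin (\<lambda>p q r s. \<Sum>t\<in>Rest. GG J A t p q r s)"
    by (rule hs_sum(1)[OF Rest_fin GG_hs(1)[OF iso A2 eps Kpos]])
  have b: "hs_norm (GG J A t) \<le> (1 + K)^4 * \<epsilon>^2" if "t \<in> Rest" for t
  proof -
    have "2 \<le> os t" using that os_rest unfolding Rest_def by auto
    have "hs_norm (GG J A t) \<le> (1 + K)^4 * \<epsilon> ^ os t" by (rule GG_hs(2)[OF iso A2 eps Kpos])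
    also have "\<dots> \<le> (1 + K)^4 * \<epsilon>^2"
      using \<open>2 \<le> os t\<close> eps Kpos by (intro mult_left_mono power_decreasing) auto
    finally show ?thesis .
  qed
  have "hs_norm (\<lambda>p q r s. \<Sum>t\<in>Rest. GG J A t p q r s) \<le> (\<Sum>t\<in>Rest. hs_norm (GG J A t))"
    by (rule hs_sum(2)[OF Rest_fin GG_hs(1)[OF iso A2 eps Kpos]])
  also have "\<dots> \<le> of_nat (card Rest) * ((1 + K)^4 * \<epsilon>^2)"
    by (rule sum_bounded_above) (use b in auto)
  also have "\<dots> \<le> 81 * ((1 + K)^4 * \<epsilon>^2)"
    by (rule mult_right_mono) (use Rest_card eps Kpos in auto)
  finally show "hs_norm (\<lambda>p q r s. \<Sum>t\<in>Rest. GG J A t p q r s) \<le> 81 * (1 + K)^4 * \<epsilon>^2" by simp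
qed

lemma A3_result: "condA3 (324 * (1 + K)^4) \<epsilon> (\<lambda>p q r s. typeI J A p q r s / typeI J A 0 0 0 0)"
proof -
  define c where "c = typeI J A 0 0 0 0"
  define P0 where "P0 = (\<lambda>p q r s. \<Sum>t\<in>Sing. GG J A t p q r s)"
  define R where "R = (\<lambda>p q r s. \<Sum>t\<in>Rest. GG J A t p q r s)"
  define P where "P = (\<lambda>p q r s. (1/c) * P0 p q r s)"
  define Q0 where "Q0 = (\<lambda>p q r s. (1 - c) * Astar p q r s + R p q r s)"
  define Q where "Q = (\<lambda>p q r s. (1/c) * Q0 p q r s)"
  have c2: "c \<ge> 1/2" unfolding c_def by (rule c_ge)
  have cpos: "c > 0" using c2 by linarith
  have ic: "\<bar>1/c\<bar> \<le> 2" using c2 cpos by (simp add: field_simps)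
  have c1: "\<bar>1 - c\<bar> \<le> 81 * (1 + K)^4 * \<epsilon>^4" using c_bound unfolding c_def by simp
  have M0: "0 \<le> (1 + K)^4" using Kpos by simp
  have P0h: "hs_fin P0" "hs_norm P0 \<le> 4 * (1 + K)^4 * \<epsilon>" unfolding P0_def by (rule P0_hs)+
  have Rh: "hs_fin R" "hs_norm R \<le> 81 * (1 + K)^4 * \<epsilon>^2" unfolding R_def by (rule R_hs)+
  have Q0h1: "hs_fin Q0" unfolding Q0_def by (rule hs_add(1)[OF hs_scale(1)[OF Astar_hs(1)] Rh(1)])
  have "hs_norm Q0 \<le> hs_norm (\<lambda>p q r s. (1 - c) * Astar p q r s) + hs_norm R"
    unfolding Q0_def by (rule hs_add(2)[OF hs_scale(1)[OF Astar_hs(1)] Rh(1)])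
  also have "\<dots> = \<bar>1 - c\<bar> + hs_norm R" by (simp add: hs_scale(2)[OF Astar_hs(1)] Astar_hs(2))
  also have "\<dots> \<le> 81 * (1 + K)^4 * \<epsilon>^4 + 81 * (1 + K)^4 * \<epsilon>^2" using c1 Rh(2) by linarith
  also have "\<dots> \<le> 162 * (1 + K)^4 * \<epsilon>^2"
  proof -
    have "\<epsilon>^4 \<le> \<epsilon>^2" using eps by (intro power_decreasing) auto
    then have "81 * (1 + K)^4 * \<epsilon>^4 \<le> 81 * (1 + K)^4 * \<epsilon>^2" using M0 by (intro mult_left_mono) auto
    then show ?thesis by linarith
  qed
  finally have Q0h2: "hs_norm Q0 \<le> 162 * (1 + K)^4 * \<epsilon>^2" .
  have eq: "typeI J A p q r s / typeI J A 0 0 0 0 = Astar p q r s + P p q r s + Q p q r s" for p q r s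
  proof -
    have eq0: "typeI J A p q r s = Astar p q r s + P0 p q r s + R p q r s" unfolding P0_def R_def by (rule decomp)
    have "typeI J A p q r s / c = Astar p q r s + P p q r s + Q p q r s"
      unfolding eq0 P_def Q_def Q0_def using cpos by (simp add: field_simps)
    then show ?thesis unfolding c_def .
  qed
  have nP: "hs_norm P \<le> 324 * (1 + K)^4 * \<epsilon>"
  proof -
    have "hs_norm P = \<bar>1/c\<bar> * hs_norm P0" unfolding P_def by (rule hs_scale(2)[OF P0h(1)])
    also have "\<dots> \<le> 2 * (4 * (1 + K)^4 * \<epsilon>)" by (rule mult_mono[OF ic P0h(2)]) (auto simp: hs_nonneg)
    also have "\<dots> \<le> 324 * (1 + K)^4 * \<epsilon>" using M0 eps by (simp add: mult_right_mono)
    finally show ?thesis .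
  qed
  have nQ: "hs_norm Q \<le> 324 * (1 + K)^4 * \<epsilon>^2"
  proof -
    have "hs_norm Q = \<bar>1/c\<bar> * hs_norm Q0" unfolding Q_def by (rule hs_scale(2)[OF Q0h1])
    also have "\<dots> \<le> 2 * (162 * (1 + K)^4 * \<epsilon>^2)" by (rule mult_mono[OF ic Q0h2]) (auto simp: hs_nonneg)
    finally show ?thesis by simp
  qed
  have cor: "P p q r s = 0" if nc: "\<not> corner p q r s" for p q r s
  proof -
    have "GG J A t p q r s = 0" if "t \<in> Sing" for t
      using GG_sing[OF iso A2 eps Kpos that] nc by auto
    then show "P p q r s = 0" unfolding P_def P0_def by simp
  qed
  have hP: "hs_fin P" unfolding P_def by (rule hs_scale(1)[OF P0h(1)])
  have hQ: "hs_fin Q" unfolding Q_def by (rule hs_scale(1)[OF Q0h1])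
  have one: "typeI J A 0 0 0 0 / typeI J A 0 0 0 0 = 1" using cpos unfolding c_def by simp
  show ?thesis unfolding condA3_def
    using one hP hQ eq nP nQ cor by blast
qed
end

theorem proposition2:
  fixes K :: real
  assumes "K > 0"
  shows "\<exists>K' \<epsilon>0. K' > 0 \<and> \<epsilon>0 > 0 \<and>
    (\<forall>J. iso_J J \<longrightarrow>
      (\<forall>\<epsilon> A. 0 < \<epsilon> \<and> \<epsilon> \<le> \<epsilon>0 \<and> condA2 K \<epsilon> A \<longrightarrow>
         \<bar>typeI J A 0 0 0 0 - 1\<bar> \<le> K' * \<epsilon>^4 \<and>
         condA3 K' \<epsilon> (\<lambda>p q r s. typeI J A p q r s / typeI J A 0 0 0 0)))"
proof -
  define K' where "K' = 324 * (1 + K)^4"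
  define e0 where "e0 = 1 / (4 * (1 + K))"
  have K'pos: "K' > 0" unfolding K'_def using assms by simp
  have e0pos: "e0 > 0" unfolding e0_def using assms by simp
  have main: "\<bar>typeI J A 0 0 0 0 - 1\<bar> \<le> K' * \<epsilon>^4 \<and>
         condA3 K' \<epsilon> (\<lambda>p q r s. typeI J A p q r s / typeI J A 0 0 0 0)"
    if iso: "iso_J J" and H: "0 < \<epsilon> \<and> \<epsilon> \<le> e0 \<and> condA2 K \<epsilon> A" for J \<epsilon> A
  proof -
    have eps: "0 < \<epsilon>" "\<epsilon> \<le> e0" and A2: "condA2 K \<epsilon> A" using H by auto
    have small: "\<epsilon> * (1 + K) \<le> 1/4"
    proof -
      have "\<epsilon> * (1 + K) \<le> e0 * (1 + K)" using eps assms by (intro mult_right_mono) auto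
      also have "\<dots> = 1/4" unfolding e0_def using assms by (simp add: field_simps)
      finally show ?thesis .
    qed
    have le1: "\<epsilon> \<le> 1"
    proof -
      have "\<epsilon> \<le> \<epsilon> * (1 + K)" using eps assms by (simp add: algebra_simps)
      then show ?thesis using small by linarith
    qed
    have cb: "\<bar>typeI J A 0 0 0 0 - 1\<bar> \<le> 81 * (1 + K)^4 * \<epsilon>^4"
      by (rule c_bound[OF iso A2 eps(1) le1 assms small])
    have "81 * (1 + K)^4 * \<epsilon>^4 \<le> K' * \<epsilon>^4" unfolding K'_def using assms eps by (intro mult_right_mono) auto
    then show ?thesis using cb A3_result[OF iso A2 eps(1) le1 assms small] unfolding K'_def by auto
  qed
  show ?thesis
    apply (rule exI[of _ K'])
    apply (rule exI[of _ e0])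
    using K'pos e0pos main by blast
qed

end
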